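(* If $(\bar\lambda,\bar\mu)\in[\lambda_0,\infty)\times(0,\infty)$ satisfies $\Xi(\bar\lambda,\bar\mu)=0$, then $\Xi_\lambda(\bar\lambda,\bar\mu)>0$ and $\Xi_\mu(\bar\lambda,\bar\mu)<0$.
   Context: Setting: - $g>0$, $\sigma>0$, and $p_0<p_1<0$. - $\gamma=\gamma_1$ on $[p_0,p_1)$ and $\gamma=\gamma_2$ on $(p_1,0]$, with $\gamma_1\in C^\alpha([p_0,p_1])$ and $\gamma_2\in C^\alpha([p_1,0])$. - $\Gamma(p)=\int_0^p\gamma$, and $a(p;\lambda)=\sqrt{\lambda-2\Gamma(p)}$ for $\lambda>2\max_{[p_0,0]}\Gamma$. - $\mathfrak z(\cdot;\lambda,\mu)$ solves $(a^3\mathfrak z')'-\mu a\mathfrak z=0$ on $(p_0,0)$ with $\mathfrak z(p_0)=0$, $\mathfrak z'(p_0)=1$. - $\Xi(\lambda,\mu):=\lambda^{3/2}\mathfrak z'(0;\lambda,\mu)-(g+\sigma\mu)\mathfrak z(0;\lambda,\mu)$, a real-analytic function of $(\lambda,\mu)$; subscripts denote partial derivatives. - $\lambda_0$ is the unique $\lambda>2\max\Gamma$ with $\frac1g=\int_{p_0}^0a(p;\lambda)^{-3}dp$. *)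

theory Defs
  imports "HOL-Analysis.Analysis"
begin

definition holder_on :: "real \<Rightarrow> real set \<Rightarrow> (real \<Rightarrow> real) \<Rightarrow> bool" where
  "holder_on \<alpha> S f \<longleftrightarrow> continuous_on S f \<and>
     (\<exists>C. \<forall>x\<in>S. \<forall>y\<in>S. \<bar>f x - f y\<bar> \<le> C * \<bar>x - y\<bar> powr \<alpha>)"

text \<open>Gamma(p) = integral from 0 to p of gamma (for p <= 0).\<close>
definition Gam :: "(real \<Rightarrow> real) \<Rightarrow> real \<Rightarrow> real" where
  "Gam \<gamma> p = - integral {p..0} \<gamma>"

definition aa :: "(real \<Rightarrow> real) \<Rightarrow> real \<Rightarrow> real \<Rightarrow> real" where
  "aa \<gamma> lam p = sqrt (lam - 2 * Gam \<gamma> p)"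

text \<open>z solves (a^3 z')' - mu a z = 0 on [p0,0] with z(p0)=0, z'(p0)=1; z' is its derivative.\<close>
definition zsol :: "(real \<Rightarrow> real) \<Rightarrow> real \<Rightarrow> real \<Rightarrow> real \<Rightarrow> (real \<Rightarrow> real) \<Rightarrow> (real \<Rightarrow> real) \<Rightarrow> bool" where
  "zsol \<gamma> p0 lam mu z z' \<longleftrightarrow>
     z p0 = 0 \<and> z' p0 = 1 \<and>
     (\<forall>p\<in>{p0..0}. (z has_real_derivative z' p) (at p within {p0..0})) \<and>
     (\<forall>p\<in>{p0..0}. ((\<lambda>q. (aa \<gamma> lam q)^3 * z' q) has_real_derivative mu * aa \<gamma> lam p * z p)
                     (at p within {p0..0}))"

definition zval :: "(real \<Rightarrow> real) \<Rightarrow> real \<Rightarrow> real \<Rightarrow> real \<Rightarrow> real \<Rightarrow> real" where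
  "zval \<gamma> p0 lam mu p = (THE v. \<exists>z z'. zsol \<gamma> p0 lam mu z z' \<and> z p = v)"

definition zder :: "(real \<Rightarrow> real) \<Rightarrow> real \<Rightarrow> real \<Rightarrow> real \<Rightarrow> real \<Rightarrow> real" where
  "zder \<gamma> p0 lam mu p = (THE v. \<exists>z z'. zsol \<gamma> p0 lam mu z z' \<and> z' p = v)"

definition Xi :: "(real \<Rightarrow> real) \<Rightarrow> real \<Rightarrow> real \<Rightarrow> real \<Rightarrow> real \<Rightarrow> real \<Rightarrow> real" where
  "Xi \<gamma> g \<sigma> p0 lam mu = lam powr (3/2) * zder \<gamma> p0 lam mu 0 - (g + \<sigma> * mu) * zval \<gamma> p0 lam mu 0"

end

theory Submission
  imports Defs
begin


lemma gronwall:
  fixes E E' :: "real \<Rightarrow> real"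
  assumes "a \<le> b" "continuous_on {a..b} E"
    and "\<And>p. p \<in> {a<..<b} \<Longrightarrow> (E has_real_derivative E' p) (at p)"
    and "\<And>p. p \<in> {a<..<b} \<Longrightarrow> E' p \<le> L * E p + \<delta>"
    and "0 \<le> L" "0 \<le> \<delta>" "p \<in> {a..b}"
  shows "E p \<le> (E a + \<delta> * (p - a)) * exp (L * (p - a))"
proof (cases "p = a")
  case True then show ?thesis by simp
next
  case False
  with assms have ap: "a < p" "p \<le> b" by auto
  define F where "F x = exp (- L * (x - a)) * E x - \<delta> * (x - a)" for x
  have cF: "continuous_on {a..p} F"
    unfolding F_def using assms(2) ap
    by (intro continuous_intros) (auto intro: continuous_on_subset)
  have dF: "(F has_real_derivative (exp (- L * (x - a)) * (E' x - L * E x) - \<delta>)) (at x)"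
    if "a < x" "x < p" for x
  proof -
    have "(E has_real_derivative E' x) (at x)" using assms(3) that ap by auto
    then show ?thesis unfolding F_def
      by (auto intro!: derivative_eq_intros simp: algebra_simps)
  qed
  have diff: "\<And>x. a < x \<Longrightarrow> x < p \<Longrightarrow> F differentiable (at x)"
    using dF real_differentiable_def by blast
  obtain l x where x: "a < x" "x < p" and dl: "(F has_real_derivative l) (at x)"
    and eq: "F p - F a = (p - a) * l"
    using MVT[OF ap(1) cF diff] by blast
  have l: "l = exp (- L * (x - a)) * (E' x - L * E x) - \<delta>"
    using DERIV_unique[OF dl dF[OF x]] .
  have "E' x - L * E x \<le> \<delta>" using assms(4)[of x] x ap by auto
  then have "exp (- L * (x - a)) * (E' x - L * E x) \<le> exp (- L * (x - a)) * \<delta>"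
    by (intro mult_left_mono) auto
  also have "\<dots> \<le> \<delta>" using assms x by (intro mult_left_le_one_le) auto
  finally have "l \<le> 0" using l by simp
  then have "(p - a) * l \<le> 0" using ap by (intro mult_nonneg_nonpos) auto
  then have "F p \<le> F a" using eq by linarith
  then have "exp (- L * (p - a)) * E p \<le> E a + \<delta> * (p - a)" by (simp add: F_def)
  then have "exp (L * (p - a)) * (exp (- L * (p - a)) * E p) \<le> exp (L * (p - a)) * (E a + \<delta> * (p - a))"
    by (intro mult_left_mono) auto
  moreover have "exp (L * (p - a)) * (exp (- L * (p - a)) * E p) = E p"
    by (simp add: exp_minus)
  ultimately show ?thesis by (simp only: mult.commute)
qed


definition sys :: "(real\<Rightarrow>real) \<Rightarrow> (real\<Rightarrow>real) \<Rightarrow> (real\<Rightarrow>real) \<Rightarrow> (real\<Rightarrow>real) \<Rightarrow> real \<Rightarrow> real \<Rightarrow> bool" where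
 "sys \<alpha> \<beta> z w a b \<longleftrightarrow> (\<forall>p\<in>{a..b}. (z has_real_derivative \<alpha> p * w p) (at p within {a..b}) \<and>
     (w has_real_derivative \<beta> p * z p) (at p within {a..b}))"

lemma sys_cont:
  assumes "sys \<alpha> \<beta> z w a b"
  shows "continuous_on {a..b} z" "continuous_on {a..b} w"
  using assms unfolding sys_def by (auto intro!: DERIV_continuous_on)

lemma sys_at:
  assumes "sys \<alpha> \<beta> z w a b" "p \<in> {a<..<b}"
  shows "(z has_real_derivative \<alpha> p * w p) (at p)" "(w has_real_derivative \<beta> p * z p) (at p)"
proof -
  have i: "p \<in> interior {a..b}" using assms(2) by auto
  have p: "p \<in> {a..b}" using assms(2) by auto
  show "(z has_real_derivative \<alpha> p * w p) (at p)" "(w has_real_derivative \<beta> p * z p) (at p)"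
    using assms(1) p at_within_interior[OF i] unfolding sys_def by metis+
qed

lemma two_ab_le: "2 * \<bar>e1 * e2\<bar> \<le> e1^2 + (e2::real)^2"
proof -
  have "0 \<le> (\<bar>e1\<bar> - \<bar>e2\<bar>)^2" by simp
  then show ?thesis by (simp add: power2_eq_square algebra_simps abs_mult)
qed

lemma aux_ineq1:
  fixes e1 e2 x y M :: real
  assumes "\<bar>x\<bar> \<le> M" "\<bar>y\<bar> \<le> M"
  shows "2 * e1 * x * e2 + 2 * e2 * y * e1 \<le> 2 * M * (e1^2 + e2^2)"
proof -
  have "2 * e1 * x * e2 + 2 * e2 * y * e1 = 2 * (e1 * e2) * (x + y)" by (simp add: algebra_simps)
  also have "\<dots> \<le> 2 * \<bar>e1 * e2\<bar> * \<bar>x + y\<bar>"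
    by (metis abs_ge_self abs_mult mult.assoc mult_left_mono zero_le_numeral abs_mult_pos abs_ge_zero)
  also have "\<dots> \<le> 2 * \<bar>e1 * e2\<bar> * (2 * M)"
    using assms by (intro mult_left_mono) auto
  also have "\<dots> \<le> (e1^2 + e2^2) * (2*M)"
    using assms two_ab_le[of e1 e2] by (intro mult_right_mono) auto
  finally show ?thesis by (simp add: algebra_simps)
qed

lemma aux_ineq2:
  fixes e d w \<epsilon> B :: real
  assumes "\<bar>d\<bar> \<le> \<epsilon>" "\<bar>w\<bar> \<le> B"
  shows "2 * e * (d * w) \<le> e^2 + \<epsilon>^2 * B^2"
proof -
  have "2 * e * (d * w) \<le> 2 * \<bar>e\<bar> * (\<bar>d\<bar> * \<bar>w\<bar>)"
    by (metis abs_ge_self abs_mult mult.assoc abs_numeral)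
  also have "\<dots> \<le> 2 * \<bar>e\<bar> * (\<epsilon> * B)"
    using assms by (intro mult_left_mono mult_mono) auto
  also have "\<dots> = 2 * \<bar>e * (\<epsilon> * B)\<bar>" using assms by (simp add: abs_mult)
  also have "\<dots> \<le> e^2 + (\<epsilon> * B)^2" by (rule two_ab_le)
  finally show ?thesis by (simp add: power_mult_distrib)
qed

lemma stability:
  assumes ab: "a \<le> b" and s1: "sys \<alpha> \<beta> z w a b" and s2: "sys \<alpha>' \<beta>' z' w' a b"
    and M: "\<And>p. p \<in> {a..b} \<Longrightarrow> \<bar>\<alpha>' p\<bar> \<le> M \<and> \<bar>\<beta>' p\<bar> \<le> M"
    and B: "\<And>p. p \<in> {a..b} \<Longrightarrow> \<bar>z p\<bar> \<le> B \<and> \<bar>w p\<bar> \<le> B"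
    and eps: "\<And>p. p \<in> {a..b} \<Longrightarrow> \<bar>\<alpha>' p - \<alpha> p\<bar> \<le> \<epsilon> \<and> \<bar>\<beta>' p - \<beta> p\<bar> \<le> \<epsilon>"
    and i1: "\<bar>z' a - z a\<bar> \<le> \<epsilon>" and i2: "\<bar>w' a - w a\<bar> \<le> \<epsilon>"
    and "0 \<le> M" and p: "p \<in> {a..b}"
  shows "(z' p - z p)^2 + (w' p - w p)^2 \<le> \<epsilon>^2 * ((2 + 2 * B^2 * (b - a)) * exp ((2*M+1) * (b - a)))"
proof -
  define E where "E x = (z' x - z x)^2 + (w' x - w x)^2" for x
  define E' where "E' x = 2*(z' x - z x)*(\<alpha>' x * w' x - \<alpha> x * w x) + 2*(w' x - w x)*(\<beta>' x*z' x - \<beta> x * z x)" for x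
  have eps0: "0 \<le> \<epsilon>" using i1 by linarith
  have cE: "continuous_on {a..b} E" unfolding E_def
    using sys_cont[OF s1] sys_cont[OF s2] by (intro continuous_intros)
  have dE: "(E has_real_derivative E' x) (at x)" if "x \<in> {a<..<b}" for x
    unfolding E_def E'_def
    using sys_at[OF s1 that] sys_at[OF s2 that]
    by (auto intro!: derivative_eq_intros simp: algebra_simps)
  have bE: "E' x \<le> (2*M+1) * E x + 2 * \<epsilon>^2 * B^2" if "x \<in> {a<..<b}" for x
  proof -
    have x: "x \<in> {a..b}" using that by auto
    define e1 where "e1 = z' x - z x"
    define e2 where "e2 = w' x - w x"
    have eq: "E' x = (2 * e1 * \<alpha>' x * e2 + 2 * e2 * \<beta>' x * e1) + 2 * e1 * ((\<alpha>' x - \<alpha> x) * w x)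
       + 2 * e2 * ((\<beta>' x - \<beta> x) * z x)"
      unfolding E'_def e1_def e2_def by (simp add: algebra_simps)
    have 1: "2 * e1 * \<alpha>' x * e2 + 2 * e2 * \<beta>' x * e1 \<le> 2 * M * (e1^2 + e2^2)"
      using M[OF x] by (intro aux_ineq1) auto
    have 2: "2 * e1 * ((\<alpha>' x - \<alpha> x) * w x) \<le> e1^2 + \<epsilon>^2 * B^2"
      using eps[OF x] B[OF x] by (intro aux_ineq2) auto
    have 3: "2 * e2 * ((\<beta>' x - \<beta> x) * z x) \<le> e2^2 + \<epsilon>^2 * B^2"
      using eps[OF x] B[OF x] by (intro aux_ineq2) auto
    have "E x = e1^2 + e2^2" unfolding E_def e1_def e2_def by simp
    then show ?thesis using eq 1 2 3 by (simp add: algebra_simps)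
  qed
  have Ea: "E a \<le> 2 * \<epsilon>^2"
  proof -
    have "\<bar>z' a - z a\<bar>^2 \<le> \<epsilon>^2" by (rule power_mono[OF i1]) simp
    then have "(z' a - z a)^2 \<le> \<epsilon>^2" by simp
    moreover have "\<bar>w' a - w a\<bar>^2 \<le> \<epsilon>^2" by (rule power_mono[OF i2]) simp
    then have "(w' a - w a)^2 \<le> \<epsilon>^2" by simp
    ultimately show ?thesis unfolding E_def by simp
  qed
  have "E p \<le> (E a + 2 * \<epsilon>^2 * B^2 * (p - a)) * exp ((2*M+1) * (p - a))"
    by (rule gronwall[OF ab cE dE bE]) (use \<open>0 \<le> M\<close> p in auto)
  also have "\<dots> \<le> (2 * \<epsilon>^2 + 2 * \<epsilon>^2 * B^2 * (b - a)) * exp ((2*M+1) * (b - a))"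
  proof (rule mult_mono)
    have "2 * \<epsilon>^2 * B^2 * (p - a) \<le> 2 * \<epsilon>^2 * B^2 * (b - a)" using p by (intro mult_left_mono) auto
    then show "E a + 2 * \<epsilon>^2 * B^2 * (p - a) \<le> 2 * \<epsilon>^2 + 2 * \<epsilon>^2 * B^2 * (b - a)" using Ea by linarith
    show "exp ((2*M+1) * (p - a)) \<le> exp ((2*M+1) * (b - a))" using p \<open>0 \<le> M\<close> by (auto intro!: mult_left_mono)
    show "0 \<le> 2 * \<epsilon>^2 + 2 * \<epsilon>^2 * B^2 * (b - a)" using ab by auto
  qed auto
  finally show ?thesis unfolding E_def by (simp add: algebra_simps)
qed


lemma cont_bound:
  fixes f :: "real \<Rightarrow> real"
  assumes "continuous_on {a..b} f"
  obtains M where "M > 0" "\<And>x. x \<in> {a..b} \<Longrightarrow> \<bar>f x\<bar> \<le> M"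
proof -
  have "bounded (f ` {a..b})"
    by (rule compact_imp_bounded[OF compact_continuous_image[OF assms compact_Icc]])
  then obtain M where "M > 0" "\<forall>x\<in>f ` {a..b}. norm x \<le> M" by (auto simp: bounded_pos)
  then show ?thesis using that by auto
qed

lemma exp_integral:
  fixes K :: real
  assumes "K > 0" "a \<le> p"
  shows "((\<lambda>s. exp (K * (s - a))) has_integral (exp (K * (p - a)) - 1) / K) {a..p}"
proof -
  have "((\<lambda>s. exp (K * (s - a))) has_integral (exp (K * (p - a)) / K - exp (K * (a - a)) / K)) {a..p}"
  proof (rule fundamental_theorem_of_calculus[OF assms(2)])
    fix x assume "x \<in> {a..p}"
    show "((\<lambda>s. exp (K * (s - a)) / K) has_vector_derivative exp (K * (x - a))) (at x within {a..p})"
      unfolding has_real_derivative_iff_has_vector_derivative[symmetric]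
      using assms by (auto intro!: derivative_eq_intros)
  qed
  then show ?thesis by (simp add: diff_divide_distrib)
qed

primrec pic :: "(real\<Rightarrow>real) \<Rightarrow> (real\<Rightarrow>real) \<Rightarrow> real \<Rightarrow> real \<Rightarrow> nat \<Rightarrow> (real\<Rightarrow>real)\<times>(real\<Rightarrow>real)" where
  "pic \<alpha> \<beta> a w0 0 = (\<lambda>_. 0, \<lambda>_. 0)"
| "pic \<alpha> \<beta> a w0 (Suc n) = (\<lambda>p. integral {a..p} (\<lambda>s. \<alpha> s * snd (pic \<alpha> \<beta> a w0 n) s),
      \<lambda>p. w0 + integral {a..p} (\<lambda>s. \<beta> s * fst (pic \<alpha> \<beta> a w0 n) s))"

lemma pic_cont:
  assumes "continuous_on {a..b} \<alpha>" "continuous_on {a..b} \<beta>"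
  shows "continuous_on {a..b} (fst (pic \<alpha> \<beta> a w0 n)) \<and> continuous_on {a..b} (snd (pic \<alpha> \<beta> a w0 n))"
proof (induction n)
  case 0 then show ?case by simp
next
  case (Suc n)
  then show ?case using assms
    by (auto intro!: continuous_intros indefinite_integral_continuous_1 integrable_continuous_real)
qed

lemma integral_bound_lemma:
  fixes f g :: "real \<Rightarrow> real"
  assumes "continuous_on {a..p} f" "(g has_integral I) {a..p}"
    and "\<And>s. s \<in> {a..p} \<Longrightarrow> \<bar>f s\<bar> \<le> g s"
  shows "\<bar>integral {a..p} f\<bar> \<le> I"
proof -
  have "norm (integral {a..p} f) \<le> integral {a..p} g"
    using assms by (intro integral_norm_bound_integral) (auto intro: integrable_continuous_real)
  then show ?thesis using assms(2) by (simp add: integral_unique)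
qed

lemma pic_diff_bound:
  assumes ca: "continuous_on {a..b} \<alpha>" and cb: "continuous_on {a..b} \<beta>"
    and M: "\<And>x. x \<in> {a..b} \<Longrightarrow> \<bar>\<alpha> x\<bar> \<le> M \<and> \<bar>\<beta> x\<bar> \<le> M" and "M > 0"
  shows "p \<in> {a..b} \<Longrightarrow>
    \<bar>fst (pic \<alpha> \<beta> a w0 (Suc n)) p - fst (pic \<alpha> \<beta> a w0 n) p\<bar> \<le> \<bar>w0\<bar> * (1/2)^n * exp (2*M*(p-a)) \<and>
    \<bar>snd (pic \<alpha> \<beta> a w0 (Suc n)) p - snd (pic \<alpha> \<beta> a w0 n) p\<bar> \<le> \<bar>w0\<bar> * (1/2)^n * exp (2*M*(p-a))"
proof (induction n arbitrary: p)
  case 0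
  then have "1 \<le> exp (2*M*(p-a))" using \<open>M>0\<close> by auto
  then have "\<bar>w0\<bar> * 1 \<le> \<bar>w0\<bar> * exp (2*M*(p-a))" by (intro mult_left_mono) auto
  then show ?case by simp
next
  case (Suc n)
  define P where "P = pic \<alpha> \<beta> a w0"
  have cP: "continuous_on {a..b} (fst (P k)) \<and> continuous_on {a..b} (snd (P k))" for k
    unfolding P_def by (rule pic_cont[OF ca cb])
  have p: "a \<le> p" "p \<le> b" using Suc.prems by auto
  have sub: "{a..p} \<subseteq> {a..b}" using p by auto
  have cPf: "continuous_on {a..p} (fst (P k))" "continuous_on {a..p} (snd (P k))"
    "continuous_on {a..p} \<alpha>" "continuous_on {a..p} \<beta>" for k
    using cP continuous_on_subset[OF _ sub] ca cb by blast+
  define c where "c = M * \<bar>w0\<bar> * (1/2)^n"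
  have hi: "((\<lambda>s. c * exp (2*M * (s - a))) has_integral c * ((exp (2*M * (p - a)) - 1) / (2*M))) {a..p}"
    by (rule has_integral_mult_right[OF exp_integral]) (use \<open>M>0\<close> p in auto)
  have fin: "c * ((exp (2*M * (p - a)) - 1) / (2*M)) \<le> \<bar>w0\<bar> * (1/2)^(Suc n) * exp (2*M*(p-a))"
  proof -
    have "c * ((exp (2*M * (p - a)) - 1) / (2*M)) = \<bar>w0\<bar> * (1/2)^(Suc n) * (exp (2*M*(p-a)) - 1)"
      unfolding c_def using \<open>M>0\<close> by (simp add: field_simps)
    also have "\<dots> \<le> \<bar>w0\<bar> * (1/2)^(Suc n) * exp (2*M*(p-a))"
      by (intro mult_left_mono) auto
    finally show ?thesis .
  qed
  have e1: "fst (P (Suc (Suc n))) p - fst (P (Suc n)) p =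
      integral {a..p} (\<lambda>s. \<alpha> s * (snd (P (Suc n)) s - snd (P n) s))"
  proof -
    have "integral {a..p} (\<lambda>s. \<alpha> s * (snd (P (Suc n)) s - snd (P n) s)) =
      integral {a..p} (\<lambda>s. \<alpha> s * snd (P (Suc n)) s - \<alpha> s * snd (P n) s)"
      by (simp add: algebra_simps)
    also have "\<dots> = integral {a..p} (\<lambda>s. \<alpha> s * snd (P (Suc n)) s) - integral {a..p} (\<lambda>s. \<alpha> s * snd (P n) s)"
      using cPf by (intro integral_diff integrable_continuous_real continuous_intros)
    finally show ?thesis by (simp add: P_def)
  qed
  have e2: "snd (P (Suc (Suc n))) p - snd (P (Suc n)) p =
      integral {a..p} (\<lambda>s. \<beta> s * (fst (P (Suc n)) s - fst (P n) s))"
  proof -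
    have "integral {a..p} (\<lambda>s. \<beta> s * (fst (P (Suc n)) s - fst (P n) s)) =
      integral {a..p} (\<lambda>s. \<beta> s * fst (P (Suc n)) s - \<beta> s * fst (P n) s)"
      by (simp add: algebra_simps)
    also have "\<dots> = integral {a..p} (\<lambda>s. \<beta> s * fst (P (Suc n)) s) - integral {a..p} (\<lambda>s. \<beta> s * fst (P n) s)"
      using cPf by (intro integral_diff integrable_continuous_real continuous_intros)
    finally show ?thesis by (simp add: P_def)
  qed
  have b1: "\<bar>integral {a..p} (\<lambda>s. \<alpha> s * (snd (P (Suc n)) s - snd (P n) s))\<bar> \<le> c * ((exp (2*M * (p - a)) - 1) / (2*M))"
  proof (rule integral_bound_lemma[OF _ hi])
    show "continuous_on {a..p} (\<lambda>s. \<alpha> s * (snd (P (Suc n)) s - snd (P n) s))"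
      using cPf by (intro continuous_intros)
    fix s assume s: "s \<in> {a..p}"
    then have sb: "s \<in> {a..b}" using sub by auto
    have "\<bar>\<alpha> s * (snd (P (Suc n)) s - snd (P n) s)\<bar> = \<bar>\<alpha> s\<bar> * \<bar>snd (P (Suc n)) s - snd (P n) s\<bar>"
      by (simp add: abs_mult)
    also have "\<dots> \<le> M * (\<bar>w0\<bar> * (1/2)^n * exp (2*M*(s-a)))"
      using M[OF sb] Suc.IH[OF sb] by (intro mult_mono) (auto simp: P_def)
    finally show "\<bar>\<alpha> s * (snd (P (Suc n)) s - snd (P n) s)\<bar> \<le> c * exp (2*M * (s - a))"
      by (simp add: c_def algebra_simps)
  qed
  have b2: "\<bar>integral {a..p} (\<lambda>s. \<beta> s * (fst (P (Suc n)) s - fst (P n) s))\<bar> \<le> c * ((exp (2*M * (p - a)) - 1) / (2*M))"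
  proof (rule integral_bound_lemma[OF _ hi])
    show "continuous_on {a..p} (\<lambda>s. \<beta> s * (fst (P (Suc n)) s - fst (P n) s))"
      using cPf by (intro continuous_intros)
    fix s assume s: "s \<in> {a..p}"
    then have sb: "s \<in> {a..b}" using sub by auto
    have "\<bar>\<beta> s * (fst (P (Suc n)) s - fst (P n) s)\<bar> = \<bar>\<beta> s\<bar> * \<bar>fst (P (Suc n)) s - fst (P n) s\<bar>"
      by (simp add: abs_mult)
    also have "\<dots> \<le> M * (\<bar>w0\<bar> * (1/2)^n * exp (2*M*(s-a)))"
      using M[OF sb] Suc.IH[OF sb] by (intro mult_mono) (auto simp: P_def)
    finally show "\<bar>\<beta> s * (fst (P (Suc n)) s - fst (P n) s)\<bar> \<le> c * exp (2*M * (s - a))"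
      by (simp add: c_def algebra_simps)
  qed
  show ?case using e1 e2 b1 b2 fin unfolding P_def by linarith
qed

lemma bounded_cont_img:
  fixes f :: "real \<Rightarrow> real"
  assumes "continuous_on {a..b} f"
  shows "bounded (f ` {a..b})"
  by (rule compact_imp_bounded[OF compact_continuous_image[OF assms compact_Icc]])

lemma limit_integral_eq:
  fixes Y :: "nat \<Rightarrow> real \<Rightarrow> real"
  assumes u: "uniform_limit {a..b} Y Yl sequentially"
    and cY: "\<And>n. continuous_on {a..b} (Y n)" and c\<alpha>: "continuous_on {a..b} \<alpha>"
    and p: "p \<in> {a..b}"
  shows "((\<lambda>n. integral {a..p} (\<lambda>s. \<alpha> s * Y n s)) \<longlongrightarrow> integral {a..p} (\<lambda>s. \<alpha> s * Yl s)) sequentially"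
proof -
  have sub: "{a..p} \<subseteq> {a..b}" using p by auto
  have cYl: "continuous_on {a..b} Yl"
    by (rule uniform_limit_theorem[OF _ u]) (auto simp: cY)
  have u': "uniform_limit {a..p} Y Yl sequentially"
    using uniform_limit_on_subset[OF u sub] .
  have "uniform_limit {a..p} (\<lambda>n s. \<alpha> s * Y n s) (\<lambda>s. \<alpha> s * Yl s) sequentially"
  proof (rule uniform_lim_mult[OF uniform_limit_const u'])
    show "bounded (\<alpha> ` {a..p})" using bounded_cont_img[OF continuous_on_subset[OF c\<alpha> sub]] .
    show "bounded (Yl ` {a..p})" using bounded_cont_img[OF continuous_on_subset[OF cYl sub]] .
  qed
  then obtain I J where I: "\<And>n. ((\<lambda>s. \<alpha> s * Y n s) has_integral I n) {a..p}"
    and J: "((\<lambda>s. \<alpha> s * Yl s) has_integral J) {a..p}" and IJ: "(I \<longlongrightarrow> J) sequentially"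
  proof (rule uniform_limit_integral)
    fix n
    have "continuous_on {a..p} (Y n)" "continuous_on {a..p} \<alpha>"
      using continuous_on_subset[OF cY sub] continuous_on_subset[OF c\<alpha> sub] by auto
    then show "continuous_on {a..p} (\<lambda>s. \<alpha> s * Y n s)" by (intro continuous_intros)
  qed auto
  have "(\<lambda>n. integral {a..p} (\<lambda>s. \<alpha> s * Y n s)) = I" by (rule ext) (rule integral_unique[OF I])
  moreover have "integral {a..p} (\<lambda>s. \<alpha> s * Yl s) = J" by (rule integral_unique[OF J])
  ultimately show ?thesis using IJ by simp
qed

lemma existence:
  assumes ab: "a \<le> b" and ca: "continuous_on {a..b} \<alpha>" and cb: "continuous_on {a..b} \<beta>"
  shows "\<exists>Z W. sys \<alpha> \<beta> Z W a b \<and> Z a = 0 \<and> W a = w0 \<and>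
     ((\<forall>p\<in>{a..b}. 0 \<le> \<alpha> p \<and> 0 \<le> \<beta> p) \<and> 0 \<le> w0 \<longrightarrow> (\<forall>p\<in>{a..b}. 0 \<le> Z p \<and> w0 \<le> W p))"
proof -
  obtain M1 where M1: "M1 > 0" "\<And>x. x \<in> {a..b} \<Longrightarrow> \<bar>\<alpha> x\<bar> \<le> M1" using cont_bound[OF ca] by blast
  obtain M2 where M2: "M2 > 0" "\<And>x. x \<in> {a..b} \<Longrightarrow> \<bar>\<beta> x\<bar> \<le> M2" using cont_bound[OF cb] by blast
  define M where "M = max M1 M2"
  have M: "\<And>x. x \<in> {a..b} \<Longrightarrow> \<bar>\<alpha> x\<bar> \<le> M \<and> \<bar>\<beta> x\<bar> \<le> M" "M > 0"
    using M1 M2 unfolding M_def by force+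
  define P where "P = pic \<alpha> \<beta> a w0"
  have cP: "continuous_on {a..b} (fst (P k))" "continuous_on {a..b} (snd (P k))" for k
    unfolding P_def using pic_cont[OF ca cb] by blast+
  define Bn where "Bn i = \<bar>w0\<bar> * (1/2)^i * exp (2*M*(b-a))" for i
  have summ: "summable Bn" unfolding Bn_def
    by (intro summable_mult2 summable_mult summable_geometric) auto
  have bnd: "\<bar>fst (P (Suc i)) x - fst (P i) x\<bar> \<le> Bn i \<and> \<bar>snd (P (Suc i)) x - snd (P i) x\<bar> \<le> Bn i"
    if x: "x \<in> {a..b}" for i x
  proof -
    have "exp (2*M*(x-a)) \<le> exp (2*M*(b-a))" using x M by (auto intro!: mult_left_mono)
    then have "\<bar>w0\<bar> * (1/2)^i * exp (2*M*(x-a)) \<le> Bn i" unfolding Bn_def by (intro mult_left_mono) auto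
    then show ?thesis using pic_diff_bound[OF ca cb M, of x w0 i] x unfolding P_def by linarith
  qed
  have P0: "fst (P 0) x = 0" "snd (P 0) x = 0" for x by (simp_all add: P_def)
  have tel1: "(\<lambda>n x. \<Sum>i<n. fst (P (Suc i)) x - fst (P i) x) = (\<lambda>n. fst (P n))"
  proof (intro ext)
    fix n x show "(\<Sum>i<n. fst (P (Suc i)) x - fst (P i) x) = fst (P n) x"
      using sum_lessThan_telescope[of "\<lambda>i. fst (P i) x" n] P0 by simp
  qed
  have tel2: "(\<lambda>n x. \<Sum>i<n. snd (P (Suc i)) x - snd (P i) x) = (\<lambda>n x. snd (P n) x)"
  proof (intro ext)
    fix n x show "(\<Sum>i<n. snd (P (Suc i)) x - snd (P i) x) = snd (P n) x"
      using sum_lessThan_telescope[of "\<lambda>i. snd (P i) x" n] P0 by simp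
  qed
  define Z where "Z x = (\<Sum>i. fst (P (Suc i)) x - fst (P i) x)" for x
  define W where "W x = (\<Sum>i. snd (P (Suc i)) x - snd (P i) x)" for x
  have uZ: "uniform_limit {a..b} (\<lambda>n. fst (P n)) Z sequentially"
    using Weierstrass_m_test[of "{a..b}" "\<lambda>i x. fst (P (Suc i)) x - fst (P i) x" Bn] bnd summ
    unfolding tel1 Z_def by auto
  have uW: "uniform_limit {a..b} (\<lambda>n. snd (P n)) W sequentially"
    using Weierstrass_m_test[of "{a..b}" "\<lambda>i x. snd (P (Suc i)) x - snd (P i) x" Bn] bnd summ
    unfolding tel2 W_def by auto
  have cZ: "continuous_on {a..b} Z" by (rule uniform_limit_theorem[OF _ uZ]) (auto simp: cP)
  have cW: "continuous_on {a..b} W" by (rule uniform_limit_theorem[OF _ uW]) (auto simp: cP)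
  have eqZ: "Z p = integral {a..p} (\<lambda>s. \<alpha> s * W s)" if p: "p \<in> {a..b}" for p
  proof -
    have "((\<lambda>n. fst (P (Suc n)) p) \<longlongrightarrow> Z p) sequentially"
      using LIMSEQ_Suc[OF tendsto_uniform_limitI[OF uZ p]] .
    moreover have "((\<lambda>n. fst (P (Suc n)) p) \<longlongrightarrow> integral {a..p} (\<lambda>s. \<alpha> s * W s)) sequentially"
      using limit_integral_eq[OF uW cP(2) ca p] by (simp add: P_def)
    ultimately show ?thesis by (rule LIMSEQ_unique)
  qed
  have eqW: "W p = w0 + integral {a..p} (\<lambda>s. \<beta> s * Z s)" if p: "p \<in> {a..b}" for p
  proof -
    have "((\<lambda>n. snd (P (Suc n)) p) \<longlongrightarrow> W p) sequentially"
      using LIMSEQ_Suc[OF tendsto_uniform_limitI[OF uW p]] .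
    moreover have "((\<lambda>n. snd (P (Suc n)) p) \<longlongrightarrow> w0 + integral {a..p} (\<lambda>s. \<beta> s * Z s)) sequentially"
      using tendsto_add[OF tendsto_const limit_integral_eq[OF uZ cP(1) cb p]] by (simp add: P_def)
    ultimately show ?thesis by (rule LIMSEQ_unique)
  qed
  have sys: "sys \<alpha> \<beta> Z W a b"
    unfolding sys_def
  proof
    fix p assume p: "p \<in> {a..b}"
    have d1: "((\<lambda>x. integral {a..x} (\<lambda>s. \<alpha> s * W s)) has_real_derivative \<alpha> p * W p) (at p within {a..b})"
      by (rule integral_has_real_derivative[OF _ p]) (use ca cW in \<open>intro continuous_intros\<close>)
    have d2: "((\<lambda>x. w0 + integral {a..x} (\<lambda>s. \<beta> s * Z s)) has_real_derivative \<beta> p * Z p) (at p within {a..b})"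
      using integral_has_real_derivative[OF _ p, of "\<lambda>s. \<beta> s * Z s"] cb cZ
      by (auto intro!: derivative_eq_intros continuous_intros)
    show "(Z has_real_derivative \<alpha> p * W p) (at p within {a..b}) \<and> (W has_real_derivative \<beta> p * Z p) (at p within {a..b})"
    proof
      show "(Z has_real_derivative \<alpha> p * W p) (at p within {a..b})"
        by (rule has_field_derivative_transform_within[OF d1 zero_less_one p]) (simp add: eqZ)
      show "(W has_real_derivative \<beta> p * Z p) (at p within {a..b})"
        by (rule has_field_derivative_transform_within[OF d2 zero_less_one p]) (simp add: eqW)
    qed
  qed
  have Za: "Z a = 0" using eqZ[of a] ab by simp
  have Wa: "W a = w0" using eqW[of a] ab by simp
  have pos: "\<forall>p\<in>{a..b}. 0 \<le> Z p \<and> w0 \<le> W p"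
    if nn: "\<forall>p\<in>{a..b}. 0 \<le> \<alpha> p \<and> 0 \<le> \<beta> p" "0 \<le> w0"
  proof -
    have ind: "\<forall>p\<in>{a..b}. 0 \<le> fst (P n) p \<and> 0 \<le> snd (P n) p \<and> (0 < n \<longrightarrow> w0 \<le> snd (P n) p)" for n
    proof (induction n)
      case 0 then show ?case by (simp add: P_def)
    next
      case (Suc n)
      show ?case
      proof
        fix p assume p: "p \<in> {a..b}"
        have sub: "{a..p} \<subseteq> {a..b}" using p by auto
        have cPs: "continuous_on {a..p} (fst (P k))" "continuous_on {a..p} (snd (P k))"
          "continuous_on {a..p} \<alpha>" "continuous_on {a..p} \<beta>" for k
          using continuous_on_subset[OF cP(1) sub] continuous_on_subset[OF cP(2) sub]
            continuous_on_subset[OF ca sub] continuous_on_subset[OF cb sub] by auto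
        have i1: "0 \<le> integral {a..p} (\<lambda>s. \<alpha> s * snd (P n) s)"
          using Suc.IH nn sub cPs
          by (intro Henstock_Kurzweil_Integration.integral_nonneg integrable_continuous_real continuous_intros)
             (auto intro!: mult_nonneg_nonneg)
        have i2: "0 \<le> integral {a..p} (\<lambda>s. \<beta> s * fst (P n) s)"
          using Suc.IH nn sub cPs
          by (intro Henstock_Kurzweil_Integration.integral_nonneg integrable_continuous_real continuous_intros)
             (auto intro!: mult_nonneg_nonneg)
        show "0 \<le> fst (P (Suc n)) p \<and> 0 \<le> snd (P (Suc n)) p \<and> (0 < Suc n \<longrightarrow> w0 \<le> snd (P (Suc n)) p)"
          using i1 i2 nn by (simp add: P_def)
      qed
    qed
    show ?thesis
    proof
      fix p assume p: "p \<in> {a..b}"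
      have "0 \<le> Z p"
        by (rule tendsto_lowerbound[OF tendsto_uniform_limitI[OF uZ p]]) (use ind p in auto)
      moreover have "w0 \<le> W p"
      proof (rule tendsto_lowerbound[OF tendsto_uniform_limitI[OF uW p]])
        show "\<forall>\<^sub>F n in sequentially. w0 \<le> snd (P n) p"
          using ind p eventually_sequentially[of "\<lambda>n. w0 \<le> snd (P n) p"] by (metis le_simps(3) less_Suc_eq_0_disj)
      qed auto
      ultimately show "0 \<le> Z p \<and> w0 \<le> W p" ..
    qed
  qed
  show ?thesis using sys Za Wa pos by blast
qed


lemma wronskian:
  assumes ab: "a \<le> b" and s1: "sys \<alpha> \<beta> z w a b" and s2: "sys \<alpha>' \<beta>' z' w' a b"
    and "z a = 0" "z' a = 0"
  shows "z b * w' b - z' b * w b =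
    integral {a..b} (\<lambda>p. (\<alpha> p - \<alpha>' p) * w p * w' p + (\<beta>' p - \<beta> p) * z p * z' p)"
proof -
  have "((\<lambda>p. (\<alpha> p - \<alpha>' p) * w p * w' p + (\<beta>' p - \<beta> p) * z p * z' p) has_integral
     ((z b * w' b - z' b * w b) - (z a * w' a - z' a * w a))) {a..b}"
  proof (rule fundamental_theorem_of_calculus[OF ab])
    fix x assume x: "x \<in> {a..b}"
    have "((\<lambda>p. z p * w' p - z' p * w p) has_real_derivative
      (\<alpha> x * w x) * w' x + z x * (\<beta>' x * z' x) - ((\<alpha>' x * w' x) * w x + z' x * (\<beta> x * z x))) (at x within {a..b})"
      using s1 s2 x unfolding sys_def by (auto intro!: derivative_eq_intros)
    then show "((\<lambda>p. z p * w' p - z' p * w p) has_vector_derivative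
      (\<alpha> x - \<alpha>' x) * w x * w' x + (\<beta>' x - \<beta> x) * z x * z' x) (at x within {a..b})"
      unfolding has_real_derivative_iff_has_vector_derivative[symmetric]
      by (rule DERIV_cong) (simp add: algebra_simps)
  qed
  then show ?thesis using assms by (simp add: integral_unique)
qed

lemma energy:
  assumes ab: "a \<le> b" and s1: "sys \<alpha> \<beta> z w a b" and "z a = 0"
  shows "z b * w b = integral {a..b} (\<lambda>p. \<alpha> p * w p ^ 2 + \<beta> p * z p ^ 2)"
proof -
  have "((\<lambda>p. \<alpha> p * w p ^ 2 + \<beta> p * z p ^ 2) has_integral (z b * w b - z a * w a)) {a..b}"
  proof (rule fundamental_theorem_of_calculus[OF ab])
    fix x assume x: "x \<in> {a..b}"
    have "((\<lambda>p. z p * w p) has_real_derivative (\<alpha> x * w x) * w x + z x * (\<beta> x * z x)) (at x within {a..b})"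
      using s1 x unfolding sys_def by (auto intro!: derivative_eq_intros)
    then show "((\<lambda>p. z p * w p) has_vector_derivative \<alpha> x * w x ^ 2 + \<beta> x * z x ^ 2) (at x within {a..b})"
      unfolding has_real_derivative_iff_has_vector_derivative[symmetric]
      by (rule DERIV_cong) (simp add: algebra_simps power2_eq_square)
  qed
  then show ?thesis using assms by (simp add: integral_unique)
qed

lemma ftc_sys:
  assumes ab: "a \<le> b" and s1: "sys \<alpha> \<beta> z w a b"
  shows "z b - z a = integral {a..b} (\<lambda>p. \<alpha> p * w p)" "w b - w a = integral {a..b} (\<lambda>p. \<beta> p * z p)"
proof -
  have "((\<lambda>p. \<alpha> p * w p) has_integral (z b - z a)) {a..b}"
    using s1 unfolding sys_def
    by (intro fundamental_theorem_of_calculus[OF ab]) (auto simp: has_real_derivative_iff_has_vector_derivative[symmetric])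
  then show "z b - z a = integral {a..b} (\<lambda>p. \<alpha> p * w p)" by (simp add: integral_unique)
  have "((\<lambda>p. \<beta> p * z p) has_integral (w b - w a)) {a..b}"
    using s1 unfolding sys_def
    by (intro fundamental_theorem_of_calculus[OF ab]) (auto simp: has_real_derivative_iff_has_vector_derivative[symmetric])
  then show "w b - w a = integral {a..b} (\<lambda>p. \<beta> p * z p)" by (simp add: integral_unique)
qed

lemma pos_integral:
  fixes f :: "real \<Rightarrow> real"
  assumes "continuous_on {a..b} f" "a < b" "\<And>x. x \<in> {a..b} \<Longrightarrow> 0 \<le> f x" "x \<in> {a..b}" "0 < f x"
  shows "0 < integral {a..b} f"
proof -
  have "0 \<le> integral {a..b} f"
    using assms by (intro Henstock_Kurzweil_Integration.integral_nonneg integrable_continuous_real) auto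
  moreover have "integral {a..b} f \<noteq> 0"
    using integral_eq_0_iff[OF assms(1,2,3)] assms(4,5) by auto
  ultimately show ?thesis by linarith
qed

lemma integral_tendsto_unif:
  fixes f :: "'b \<Rightarrow> real \<Rightarrow> real"
  assumes u: "uniform_limit {a..b} f g F" and ab: "a \<le> b"
    and i: "\<forall>\<^sub>F t in F. continuous_on {a..b} (f t)" and g: "continuous_on {a..b} g"
  shows "((\<lambda>t. integral {a..b} (f t)) \<longlongrightarrow> integral {a..b} g) F"
proof (rule tendstoI)
  fix e :: real assume e: "e > 0"
  define e' where "e' = e / (b - a + 1)"
  have e': "e' > 0" using e ab by (simp add: e'_def)
  have ev: "\<forall>\<^sub>F t in F. \<forall>x\<in>{a..b}. dist (f t x) (g x) < e'"
    using u e' by (auto simp: uniform_limit_iff)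
  show "\<forall>\<^sub>F t in F. dist (integral {a..b} (f t)) (integral {a..b} g) < e"
    using ev i
  proof eventually_elim
    case (elim t)
    have "integral {a..b} (f t) - integral {a..b} g = integral {a..b} (\<lambda>x. f t x - g x)"
      using elim g by (intro integral_diff[symmetric] integrable_continuous_real) auto
    moreover have "norm (integral {a..b} (\<lambda>x. f t x - g x)) \<le> integral {a..b} (\<lambda>x. e')"
      using elim g
      by (intro integral_norm_bound_integral integrable_continuous_real continuous_intros)
         (auto simp: dist_real_def less_imp_le)
    moreover have "integral {a..b} (\<lambda>x. e') = e' * (b - a)" using ab by simp
    moreover have "e' * (b - a) < e"
      using e ab unfolding e'_def by (simp add: field_simps)
    ultimately show ?case using ab by (simp add: dist_real_def mult.commute)
  qed
qed

lemma unif_dq: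
  fixes \<phi> \<phi>' :: "real \<Rightarrow> real"
  assumes r: "0 < r"
    and d: "\<And>t. t \<in> {s1-r..s2+r} \<Longrightarrow> (\<phi> has_real_derivative \<phi>' t) (at t)"
    and c: "continuous_on {s1-r..s2+r} \<phi>'" and e: "e > 0"
  shows "\<exists>d>0. \<forall>h s. h \<noteq> 0 \<and> \<bar>h\<bar> < d \<and> s \<in> {s1..s2} \<longrightarrow> \<bar>(\<phi> (s+h) - \<phi> s) / h - \<phi>' s\<bar> \<le> e"
proof -
  have "uniformly_continuous_on {s1-r..s2+r} \<phi>'"
    using compact_uniformly_continuous[OF c compact_Icc] .
  then obtain d0 where d0: "d0 > 0" "\<And>x x'. x \<in> {s1-r..s2+r} \<Longrightarrow> x' \<in> {s1-r..s2+r} \<Longrightarrow> dist x' x < d0 \<Longrightarrow> dist (\<phi>' x') (\<phi>' x) < e"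
    unfolding uniformly_continuous_on_def using e by metis
  show ?thesis
  proof (intro exI[of _ "min d0 r"] conjI allI impI)
    show "min d0 r > 0" using d0 r by simp
    fix h s assume hs: "h \<noteq> 0 \<and> \<bar>h\<bar> < min d0 r \<and> s \<in> {s1..s2}"
    then have s: "s \<in> {s1..s2}" and h: "h \<noteq> 0" "\<bar>h\<bar> < d0" "\<bar>h\<bar> < r" by auto
    obtain \<xi> where \<xi>: "\<bar>\<xi> - s\<bar> < \<bar>h\<bar>" "\<phi> (s+h) - \<phi> s = h * \<phi>' \<xi>"
    proof (cases "h > 0")
      case True
      have "\<exists>z. s < z \<and> z < s + h \<and> \<phi> (s+h) - \<phi> s = (s + h - s) * \<phi>' z"
        using True s h by (intro MVT2) (auto intro!: d)
      then obtain z where "s < z" "z < s + h" "\<phi> (s + h) - \<phi> s = (s + h - s) * \<phi>' z" by blast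
      then show ?thesis using that[of z] True by auto
    next
      case False
      then have hn: "h < 0" using h by auto
      have "\<exists>z. s + h < z \<and> z < s \<and> \<phi> s - \<phi> (s + h) = (s - (s + h)) * \<phi>' z"
        using hn s h by (intro MVT2) (auto intro!: d)
      then obtain z where "s + h < z" "z < s" "\<phi> s - \<phi> (s + h) = (s - (s + h)) * \<phi>' z" by blast
      then show ?thesis using that[of z] hn by (auto simp: algebra_simps)
    qed
    have "(\<phi> (s+h) - \<phi> s) / h = \<phi>' \<xi>" using \<xi> h by simp
    moreover have "dist (\<phi>' \<xi>) (\<phi>' s) < e"
      using \<xi> s h by (intro d0(2)) (auto simp: dist_real_def)
    ultimately show "\<bar>(\<phi> (s+h) - \<phi> s) / h - \<phi>' s\<bar> \<le> e" by (simp add: dist_real_def)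
  qed
qed

lemma uniqueness:
  assumes ab: "a \<le> b" and s1: "sys \<alpha> \<beta> z w a b" and s2: "sys \<alpha> \<beta> z' w' a b"
    and ca: "continuous_on {a..b} \<alpha>" and cb: "continuous_on {a..b} \<beta>"
    and i: "z' a = z a" "w' a = w a" and p: "p \<in> {a..b}"
  shows "z' p = z p \<and> w' p = w p"
proof -
  obtain M1 where M1: "\<And>x. x \<in> {a..b} \<Longrightarrow> \<bar>\<alpha> x\<bar> \<le> M1" using cont_bound[OF ca] by blast
  obtain M2 where M2: "\<And>x. x \<in> {a..b} \<Longrightarrow> \<bar>\<beta> x\<bar> \<le> M2" using cont_bound[OF cb] by blast
  obtain B1 where B1: "\<And>x. x \<in> {a..b} \<Longrightarrow> \<bar>z x\<bar> \<le> B1" using cont_bound[OF sys_cont(1)[OF s1]] by blast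
  obtain B2 where B2: "\<And>x. x \<in> {a..b} \<Longrightarrow> \<bar>w x\<bar> \<le> B2" using cont_bound[OF sys_cont(2)[OF s1]] by blast
  have "(z' p - z p)^2 + (w' p - w p)^2 \<le> 0^2 * ((2 + 2 * (max B1 B2)^2 * (b - a)) * exp ((2*(max (max M1 M2) 0)+1) * (b - a)))"
    by (rule stability[OF ab s1 s2 _ _ _ _ _ _ p]) (use M1 M2 B1 B2 i in \<open>force+\<close>)
  then have "(z' p - z p)^2 + (w' p - w p)^2 \<le> 0" by simp
  then have "(z' p - z p)^2 + (w' p - w p)^2 = 0"
    using add_nonneg_nonneg[OF zero_le_power2 zero_le_power2, of "z' p - z p" "w' p - w p"] by linarith
  then show ?thesis by (simp add: sum_power2_eq_zero_iff)
qed

lemma deriv_from_quot: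
  fixes f Q :: "real \<Rightarrow> real"
  assumes ev: "\<forall>\<^sub>F y in at x. f y - f x = (y - x) * Q y" and Q: "(Q \<longlongrightarrow> D) (at x)"
  shows "(f has_real_derivative D) (at x)"
  unfolding has_field_derivative_iff
proof (rule Lim_transform_eventually[OF Q])
  have "\<forall>\<^sub>F y in at x. y \<noteq> x" by (simp add: eventually_at_filter)
  then show "\<forall>\<^sub>F y in at x. Q y = (f y - f x) / (y - x)"
    using ev by eventually_elim simp
qed

lemma stab_unif:
  assumes ab: "a \<le> b" and s1: "sys \<alpha> \<beta> z w a b"
    and s2: "\<forall>\<^sub>F t in F. sys (\<alpha>' t) (\<beta>' t) (z' t) (w' t) a b"
    and M: "\<forall>\<^sub>F t in F. \<forall>p\<in>{a..b}. \<bar>\<alpha>' t p\<bar> \<le> M \<and> \<bar>\<beta>' t p\<bar> \<le> M" and M0: "0 \<le> M"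
    and e0: "(e \<longlongrightarrow> 0) F"
    and ee: "\<forall>\<^sub>F t in F. (\<forall>p\<in>{a..b}. \<bar>\<alpha>' t p - \<alpha> p\<bar> \<le> e t \<and> \<bar>\<beta>' t p - \<beta> p\<bar> \<le> e t) \<and>
        \<bar>z' t a - z a\<bar> \<le> e t \<and> \<bar>w' t a - w a\<bar> \<le> e t"
  shows "uniform_limit {a..b} z' z F" "uniform_limit {a..b} w' w F"
proof -
  obtain B1 where B1: "\<And>x. x \<in> {a..b} \<Longrightarrow> \<bar>z x\<bar> \<le> B1" using cont_bound[OF sys_cont(1)[OF s1]] by blast
  obtain B2 where B2: "\<And>x. x \<in> {a..b} \<Longrightarrow> \<bar>w x\<bar> \<le> B2" using cont_bound[OF sys_cont(2)[OF s1]] by blast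
  define B where "B = max B1 B2"
  define K where "K = (2 + 2 * B^2 * (b - a)) * exp ((2*M+1) * (b - a))"
  have K0: "0 \<le> K" unfolding K_def using ab by auto
  have main: "\<forall>\<^sub>F t in F. \<forall>p\<in>{a..b}. \<bar>z' t p - z p\<bar> \<le> \<bar>e t\<bar> * sqrt K \<and> \<bar>w' t p - w p\<bar> \<le> \<bar>e t\<bar> * sqrt K"
    using s2 M ee
  proof eventually_elim
    case (elim t)
    show ?case
    proof
      fix p assume p: "p \<in> {a..b}"
      have st: "(z' t p - z p)^2 + (w' t p - w p)^2 \<le> (e t)^2 * K"
        unfolding K_def
        by (rule stability[OF ab s1 elim(1) _ _ _ _ _ M0 p]) (use elim B1 B2 in \<open>auto simp: B_def intro: le_max_iff_disj[THEN iffD2]\<close>)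
      have r: "sqrt ((e t)^2 * K) = \<bar>e t\<bar> * sqrt K" by (simp add: real_sqrt_mult)
      have "sqrt ((z' t p - z p)^2) \<le> sqrt ((e t)^2 * K)"
        using st by (intro real_sqrt_le_mono) (smt (verit) zero_le_power2)
      moreover have "sqrt ((w' t p - w p)^2) \<le> sqrt ((e t)^2 * K)"
        using st by (intro real_sqrt_le_mono) (smt (verit) zero_le_power2)
      ultimately show "\<bar>z' t p - z p\<bar> \<le> \<bar>e t\<bar> * sqrt K \<and> \<bar>w' t p - w p\<bar> \<le> \<bar>e t\<bar> * sqrt K"
        using r by simp
    qed
  qed
  have small: "\<forall>\<^sub>F t in F. \<bar>e t\<bar> * sqrt K < \<epsilon>" if "\<epsilon> > 0" for \<epsilon>
  proof -
    have "((\<lambda>t. \<bar>e t\<bar> * sqrt K) \<longlongrightarrow> \<bar>0\<bar> * sqrt K) F"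
      by (intro tendsto_intros e0)
    then show ?thesis using that by (simp add: order_tendstoD(2))
  qed
  show "uniform_limit {a..b} z' z F"
  proof (rule uniform_limitI)
    fix \<epsilon> :: real assume "\<epsilon> > 0"
    show "\<forall>\<^sub>F t in F. \<forall>x\<in>{a..b}. dist (z' t x) (z x) < \<epsilon>"
      using main small[OF \<open>\<epsilon> > 0\<close>] by eventually_elim (force simp: dist_real_def)
  qed
  show "uniform_limit {a..b} w' w F"
  proof (rule uniform_limitI)
    fix \<epsilon> :: real assume "\<epsilon> > 0"
    show "\<forall>\<^sub>F t in F. \<forall>x\<in>{a..b}. dist (w' t x) (w x) < \<epsilon>"
      using main small[OF \<open>\<epsilon> > 0\<close>] by eventually_elim (force simp: dist_real_def)
  qed
qed


lemma powr_three_halves: "(x::real) > 0 \<Longrightarrow> x powr (3/2) = sqrt x ^ 3"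
proof -
  assume x: "x > 0"
  have "x powr (3/2) = x powr 1 * x powr (1/2)" by (subst powr_add[symmetric]) simp
  also have "\<dots> = x * sqrt x" using x by (simp add: powr_half_sqrt)
  also have "\<dots> = sqrt x ^ 3" using x by (simp add: power3_eq_cube power2_eq_square[symmetric] real_sqrt_pow2
      mult.assoc[symmetric])
  finally show ?thesis .
qed

locale prob =
  fixes \<gamma> :: "real \<Rightarrow> real" and p0 c :: real
  assumes p0: "p0 < 0" and cG: "continuous_on {p0..0} (Gam \<gamma>)"
    and Gc: "\<And>p. p \<in> {p0..0} \<Longrightarrow> 2 * Gam \<gamma> p \<le> c" and Gam0: "Gam \<gamma> 0 = 0"
begin

definition al where "al lam p = 1 / (aa \<gamma> lam p)^3"
definition be where "be lam mu p = mu * aa \<gamma> lam p"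

lemma c_nonneg: "0 \<le> c" using Gc[of 0] p0 Gam0 by simp

lemma A_pos: "lam > c \<Longrightarrow> p \<in> {p0..0} \<Longrightarrow> 0 < aa \<gamma> lam p"
  using Gc[of p] unfolding aa_def by simp

lemma A0: "aa \<gamma> lam 0 = sqrt lam" unfolding aa_def by (simp add: Gam0)

lemma A_cont: "continuous_on {p0..0} (aa \<gamma> lam)"
  unfolding aa_def[abs_def] using cG by (intro continuous_intros)

lemma al_cont: assumes l: "lam > c" shows "continuous_on {p0..0} (al lam)"
  unfolding al_def[abs_def] using A_cont A_pos[OF l] by (intro continuous_intros) force+

lemma be_cont: "continuous_on {p0..0} (be lam mu)"
  unfolding be_def[abs_def] using A_cont by (intro continuous_intros)

definition PS where "PS lam mu Z W \<longleftrightarrow> sys (al lam) (be lam mu) Z W p0 0 \<and> Z p0 = 0 \<and> W p0 = aa \<gamma> lam p0 ^ 3 \<and>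
   (0 \<le> mu \<longrightarrow> (\<forall>p\<in>{p0..0}. 0 \<le> Z p \<and> aa \<gamma> lam p0 ^ 3 \<le> W p))"

lemma PS_ex: "lam > c \<Longrightarrow> \<exists>Z W. PS lam mu Z W"
proof -
  assume l: "lam > c"
  obtain Z W where "sys (al lam) (be lam mu) Z W p0 0 \<and> Z p0 = 0 \<and> W p0 = aa \<gamma> lam p0 ^ 3 \<and>
     ((\<forall>p\<in>{p0..0}. 0 \<le> al lam p \<and> 0 \<le> be lam mu p) \<and> 0 \<le> aa \<gamma> lam p0 ^ 3 \<longrightarrow> (\<forall>p\<in>{p0..0}. 0 \<le> Z p \<and> aa \<gamma> lam p0 ^ 3 \<le> W p))"
    using existence[OF _ al_cont[OF l] be_cont[of lam mu], where ?w0.0 = "aa \<gamma> lam p0 ^ 3"] p0 by force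
  moreover have "0 \<le> mu \<Longrightarrow> (\<forall>p\<in>{p0..0}. 0 \<le> al lam p \<and> 0 \<le> be lam mu p) \<and> 0 \<le> aa \<gamma> lam p0 ^ 3"
    using A_pos[OF l] p0 by (auto simp: al_def be_def less_imp_le)
  ultimately show ?thesis unfolding PS_def by blast
qed

definition Zs where "Zs lam mu = fst (SOME ZW. PS lam mu (fst ZW) (snd ZW))"
definition Ws where "Ws lam mu = snd (SOME ZW. PS lam mu (fst ZW) (snd ZW))"

lemma PS_Zs: "lam > c \<Longrightarrow> PS lam mu (Zs lam mu) (Ws lam mu)"
proof -
  assume "lam > c"
  then obtain Z W where "PS lam mu Z W" using PS_ex by blast
  then have "PS lam mu (fst (Z, W)) (snd (Z, W))" by simp
  then show ?thesis unfolding Zs_def Ws_def by (rule someI[where P = "\<lambda>ZW. PS lam mu (fst ZW) (snd ZW)"])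
qed

lemma sol_props:
  assumes "lam > c"
  shows "sys (al lam) (be lam mu) (Zs lam mu) (Ws lam mu) p0 0" "Zs lam mu p0 = 0"
    "Ws lam mu p0 = aa \<gamma> lam p0 ^ 3"
    "0 \<le> mu \<Longrightarrow> p \<in> {p0..0} \<Longrightarrow> 0 \<le> Zs lam mu p \<and> aa \<gamma> lam p0 ^ 3 \<le> Ws lam mu p"
  using PS_Zs[OF assms, of mu] unfolding PS_def by auto

lemma zsol_char:
  assumes l: "lam > c" and zs: "zsol \<gamma> p0 lam mu z z'"
  shows "z 0 = Zs lam mu 0 \<and> z' 0 = al lam 0 * Ws lam mu 0"
proof -
  define w where "w q = aa \<gamma> lam q ^ 3 * z' q" for q
  have s: "sys (al lam) (be lam mu) z w p0 0"
    unfolding sys_def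
  proof
    fix p assume p: "p \<in> {p0..0}"
    have Ap: "0 < aa \<gamma> lam p" using A_pos[OF l p] .
    have eq: "z' p = al lam p * w p" unfolding al_def w_def using Ap by simp
    have "(z has_real_derivative z' p) (at p within {p0..0})" using zs p unfolding zsol_def by auto
    then have 1: "(z has_real_derivative al lam p * w p) (at p within {p0..0})" using eq by simp
    have 2: "(w has_real_derivative be lam mu p * z p) (at p within {p0..0})"
      using zs p unfolding zsol_def w_def[abs_def] be_def by auto
    show "(z has_real_derivative al lam p * w p) (at p within {p0..0}) \<and>
          (w has_real_derivative be lam mu p * z p) (at p within {p0..0})" using 1 2 ..
  qed
  have i: "z p0 = Zs lam mu p0" "w p0 = Ws lam mu p0"
    using zs sol_props[OF l] unfolding zsol_def w_def by auto
  have "z 0 = Zs lam mu 0 \<and> w 0 = Ws lam mu 0"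
    using uniqueness[OF _ sol_props(1)[OF l] s al_cont[OF l] be_cont i] p0 by auto
  moreover have "z' 0 = al lam 0 * w 0" unfolding al_def w_def using A_pos[OF l, of 0] p0 by simp
  ultimately show ?thesis by simp
qed

lemma zsol_ours:
  assumes l: "lam > c"
  shows "zsol \<gamma> p0 lam mu (Zs lam mu) (\<lambda>p. al lam p * Ws lam mu p)"
proof -
  have s: "sys (al lam) (be lam mu) (Zs lam mu) (Ws lam mu) p0 0" by (rule sol_props(1)[OF l])
  have d2: "((\<lambda>q. aa \<gamma> lam q ^ 3 * (al lam q * Ws lam mu q)) has_real_derivative mu * aa \<gamma> lam p * Zs lam mu p) (at p within {p0..0})"
    if p: "p \<in> {p0..0}" for p
  proof (rule has_field_derivative_transform_within[OF _ zero_less_one p])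
    show "(Ws lam mu has_real_derivative mu * aa \<gamma> lam p * Zs lam mu p) (at p within {p0..0})"
      using s p unfolding sys_def be_def by auto
    fix x assume "x \<in> {p0..0}"
    then show "Ws lam mu x = aa \<gamma> lam x ^ 3 * (al lam x * Ws lam mu x)"
      using A_pos[OF l, of x] unfolding al_def by simp
  qed
  show ?thesis unfolding zsol_def
    using s d2 sol_props(2,3)[OF l] A_pos[OF l, of p0] p0 unfolding sys_def by (auto simp: al_def)
qed

lemma Xi_eq:
  assumes l: "lam > c"
  shows "Xi \<gamma> g \<sigma> p0 lam mu = Ws lam mu 0 - (g + \<sigma> * mu) * Zs lam mu 0"
proof -
  have zv: "zval \<gamma> p0 lam mu 0 = Zs lam mu 0"
    unfolding zval_def
  proof (rule the_equality)
    show "\<exists>z z'. zsol \<gamma> p0 lam mu z z' \<and> z 0 = Zs lam mu 0" using zsol_ours[OF l] by blast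
  qed (use zsol_char[OF l] in blast)
  have zd: "zder \<gamma> p0 lam mu 0 = al lam 0 * Ws lam mu 0"
    unfolding zder_def
  proof (rule the_equality)
    show "\<exists>z z'. zsol \<gamma> p0 lam mu z z' \<and> z' 0 = al lam 0 * Ws lam mu 0" using zsol_ours[OF l] by blast
  qed (use zsol_char[OF l] in blast)
  have lp: "lam > 0" using l c_nonneg by linarith
  have "lam powr (3/2) * al lam 0 = 1"
    using lp by (simp add: powr_three_halves al_def A0)
  then show ?thesis unfolding Xi_def zv zd by (simp add: mult.assoc[symmetric])
qed

end


context prob begin

lemma unif_mu:
  assumes l: "lb > c"
  shows "uniform_limit {p0..0} (\<lambda>m. Zs lb m) (Zs lb mb) (at mb)"
        "uniform_limit {p0..0} (\<lambda>m. Ws lb m) (Ws lb mb) (at mb)"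
proof -
  obtain Am where Am: "\<And>p. p \<in> {p0..0} \<Longrightarrow> \<bar>aa \<gamma> lb p\<bar> \<le> Am" using cont_bound[OF A_cont] by blast
  obtain Al where Al: "\<And>p. p \<in> {p0..0} \<Longrightarrow> \<bar>al lb p\<bar> \<le> Al" using cont_bound[OF al_cont[OF l]] by blast
  have Am0: "0 \<le> Am" using Am[of 0] p0 by auto
  define M where "M = max Al ((\<bar>mb\<bar> + 1) * Am)"
  define e where "e t = \<bar>t - mb\<bar> * Am" for t
  have e0: "(e \<longlongrightarrow> 0) (at mb)"
  proof -
    have "((\<lambda>t. \<bar>t - mb\<bar> * Am) \<longlongrightarrow> \<bar>mb - mb\<bar> * Am) (at mb)"
      by (intro tendsto_intros)
    then show ?thesis by (simp add: e_def[abs_def])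
  qed
  have near: "\<forall>\<^sub>F t in at mb. \<bar>t - mb\<bar> < 1"
    by (simp add: eventually_at dist_real_def) (metis zero_less_one)
  have M: "\<forall>\<^sub>F t in at mb. \<forall>p\<in>{p0..0}. \<bar>al lb p\<bar> \<le> M \<and> \<bar>be lb t p\<bar> \<le> M"
    using near
  proof eventually_elim
    case (elim t)
    show ?case
    proof
      fix p assume p: "p \<in> {p0..0}"
      have "\<bar>be lb t p\<bar> = \<bar>t\<bar> * \<bar>aa \<gamma> lb p\<bar>" by (simp add: be_def abs_mult)
      also have "\<dots> \<le> (\<bar>mb\<bar> + 1) * Am" using elim Am[OF p] by (intro mult_mono) auto
      finally show "\<bar>al lb p\<bar> \<le> M \<and> \<bar>be lb t p\<bar> \<le> M" using Al[OF p] unfolding M_def by auto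
    qed
  qed
  have "0 \<le> (\<bar>mb\<bar> + 1) * Am" using Am0 by simp
  then have M0: "0 \<le> M" unfolding M_def by (simp add: le_max_iff_disj)
  have ee: "\<forall>\<^sub>F t in at mb. (\<forall>p\<in>{p0..0}. \<bar>al lb p - al lb p\<bar> \<le> e t \<and> \<bar>be lb t p - be lb mb p\<bar> \<le> e t) \<and>
        \<bar>Zs lb t p0 - Zs lb mb p0\<bar> \<le> e t \<and> \<bar>Ws lb t p0 - Ws lb mb p0\<bar> \<le> e t"
  proof (rule always_eventually, intro allI conjI ballI)
    fix t p assume p: "p \<in> {p0..0}"
    show "\<bar>al lb p - al lb p\<bar> \<le> e t" using Am0 by (simp add: e_def)
    have "\<bar>be lb t p - be lb mb p\<bar> = \<bar>t - mb\<bar> * \<bar>aa \<gamma> lb p\<bar>" by (simp add: be_def abs_mult[symmetric] algebra_simps)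
    also have "\<dots> \<le> e t" unfolding e_def using Am[OF p] by (intro mult_left_mono) auto
    finally show "\<bar>be lb t p - be lb mb p\<bar> \<le> e t" .
  next
    fix t
    show "\<bar>Zs lb t p0 - Zs lb mb p0\<bar> \<le> e t" "\<bar>Ws lb t p0 - Ws lb mb p0\<bar> \<le> e t"
      using sol_props(2,3)[OF l] Am0 by (auto simp: e_def)
  qed
  have s2: "\<forall>\<^sub>F t in at mb. sys (al lb) (be lb t) (Zs lb t) (Ws lb t) p0 0"
    using sol_props(1)[OF l] by simp
  show "uniform_limit {p0..0} (\<lambda>m. Zs lb m) (Zs lb mb) (at mb)"
       "uniform_limit {p0..0} (\<lambda>m. Ws lb m) (Ws lb mb) (at mb)"
    using stab_unif[OF _ sol_props(1)[OF l, of mb] s2 M M0 e0 ee] p0 by auto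
qed

lemma deriv_mu:
  assumes l: "lb > c" and X0: "Ws lb mb 0 - (g + \<sigma> * mb) * Zs lb mb 0 = 0" and Z0: "Zs lb mb 0 \<noteq> 0"
  shows "((\<lambda>m. Xi \<gamma> g \<sigma> p0 lb m) has_real_derivative
     (integral {p0..0} (\<lambda>p. aa \<gamma> lb p * Zs lb mb p * Zs lb mb p) - \<sigma> * Zs lb mb 0 * Zs lb mb 0) / Zs lb mb 0) (at mb)"
proof -
  define z where "z = Zs lb mb"
  define w where "w = Ws lb mb"
  define I where "I m = integral {p0..0} (\<lambda>p. aa \<gamma> lb p * z p * Zs lb m p)" for m
  define Q where "Q m = (I m - \<sigma> * Zs lb m 0 * z 0) / z 0" for m
  have s0: "sys (al lb) (be lb mb) z w p0 0" unfolding z_def w_def by (rule sol_props(1)[OF l])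
  have cz: "continuous_on {p0..0} z" using sys_cont[OF s0] by simp
  have eq: "Xi \<gamma> g \<sigma> p0 lb m - Xi \<gamma> g \<sigma> p0 lb mb = (m - mb) * Q m" for m
  proof -
    have sm: "sys (al lb) (be lb m) (Zs lb m) (Ws lb m) p0 0" by (rule sol_props(1)[OF l])
    have wr: "z 0 * Ws lb m 0 - Zs lb m 0 * w 0 =
      integral {p0..0} (\<lambda>p. (al lb p - al lb p) * w p * Ws lb m p + (be lb m p - be lb mb p) * z p * Zs lb m p)"
      using wronskian[OF _ s0 sm] p0 sol_props(2)[OF l] by (simp add: z_def)
    also have "\<dots> = integral {p0..0} (\<lambda>p. (m - mb) * (aa \<gamma> lb p * z p * Zs lb m p))"
      by (rule integral_cong) (simp add: be_def algebra_simps)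
    also have "\<dots> = (m - mb) * I m" unfolding I_def by simp
    finally have wr': "z 0 * Ws lb m 0 - Zs lb m 0 * w 0 = (m - mb) * I m" .
    have x0: "Xi \<gamma> g \<sigma> p0 lb mb = 0" using Xi_eq[OF l] X0 by simp
    have "z 0 * Xi \<gamma> g \<sigma> p0 lb m = z 0 * (Ws lb m 0 - (g + \<sigma> * m) * Zs lb m 0)" by (simp add: Xi_eq[OF l])
    also have "\<dots> = (m - mb) * I m + Zs lb m 0 * (w 0 - (g + \<sigma> * mb) * z 0) - \<sigma> * (m - mb) * Zs lb m 0 * z 0"
      using wr' by (simp add: algebra_simps)
    also have "\<dots> = (m - mb) * (I m - \<sigma> * Zs lb m 0 * z 0)"
      using X0 by (simp add: z_def w_def algebra_simps)
    finally have "z 0 * Xi \<gamma> g \<sigma> p0 lb m = (m - mb) * (I m - \<sigma> * Zs lb m 0 * z 0)" .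
    then show ?thesis using Z0 x0 unfolding Q_def z_def by (simp add: field_simps)
  qed
  have uZ: "uniform_limit {p0..0} (\<lambda>m. Zs lb m) z (at mb)" unfolding z_def by (rule unif_mu[OF l])
  have lim_I: "(I \<longlongrightarrow> integral {p0..0} (\<lambda>p. aa \<gamma> lb p * z p * z p)) (at mb)"
    unfolding I_def
  proof (rule integral_tendsto_unif)
    show "uniform_limit {p0..0} (\<lambda>m p. aa \<gamma> lb p * z p * Zs lb m p) (\<lambda>p. aa \<gamma> lb p * z p * z p) (at mb)"
    proof (rule uniform_lim_mult[OF uniform_limit_const uZ])
      show "bounded ((\<lambda>p. aa \<gamma> lb p * z p) ` {p0..0})"
        using A_cont cz by (intro bounded_cont_img continuous_intros)
      show "bounded (z ` {p0..0})" using bounded_cont_img[OF cz] .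
    qed
    show "\<forall>\<^sub>F m in at mb. continuous_on {p0..0} (\<lambda>p. aa \<gamma> lb p * z p * Zs lb m p)"
      using A_cont cz sys_cont(1)[OF sol_props(1)[OF l]] by (intro always_eventually allI continuous_intros)
    show "continuous_on {p0..0} (\<lambda>p. aa \<gamma> lb p * z p * z p)"
      using A_cont cz by (intro continuous_intros)
  qed (use p0 in auto)
  have lim_Z: "((\<lambda>m. Zs lb m 0) \<longlongrightarrow> z 0) (at mb)"
    using tendsto_uniform_limitI[OF uZ, of 0] p0 by auto
  have "(Q \<longlongrightarrow> (integral {p0..0} (\<lambda>p. aa \<gamma> lb p * z p * z p) - \<sigma> * z 0 * z 0) / z 0) (at mb)"
    unfolding Q_def[abs_def] by (intro tendsto_intros lim_I lim_Z) (use Z0 z_def in auto)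
  then show ?thesis
    by (intro deriv_from_quot[where Q = Q]) (auto simp: eq z_def)
qed

end


lemma unif_quot_bound:
  fixes f :: "real \<Rightarrow> real \<Rightarrow> real"
  assumes u: "uniform_limit S (\<lambda>t p. (f t p - f0 p) / (t - x)) L (at x)" and b: "bounded (L ` S)"
  shows "\<exists>C\<ge>0. \<forall>\<^sub>F t in at x. \<forall>p\<in>S. \<bar>f t p - f0 p\<bar> \<le> C * \<bar>t - x\<bar>"
proof -
  obtain B where B: "B > 0" "\<forall>y\<in>L ` S. norm y \<le> B" using b by (auto simp: bounded_pos)
  have ev: "\<forall>\<^sub>F t in at x. \<forall>p\<in>S. dist ((f t p - f0 p) / (t - x)) (L p) < 1"
    using u by (auto simp: uniform_limit_iff)
  have ne: "\<forall>\<^sub>F t in at x. t \<noteq> x" by (simp add: eventually_at_filter)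
  have "\<forall>\<^sub>F t in at x. \<forall>p\<in>S. \<bar>f t p - f0 p\<bar> \<le> (B + 1) * \<bar>t - x\<bar>"
    using ev ne
  proof eventually_elim
    case (elim t)
    show ?case
    proof
      fix p assume p: "p \<in> S"
      have d: "\<bar>(f t p - f0 p) / (t - x) - L p\<bar> < 1" using elim(1) p by (simp add: dist_real_def)
      have "\<bar>L p\<bar> \<le> B" using B(2) p by auto
      then have "\<bar>(f t p - f0 p) / (t - x)\<bar> \<le> B + 1" using d by linarith
      then have "\<bar>f t p - f0 p\<bar> / \<bar>t - x\<bar> \<le> B + 1" by (simp add: abs_divide)
      then show "\<bar>f t p - f0 p\<bar> \<le> (B + 1) * \<bar>t - x\<bar>" using elim(2) by (simp add: divide_le_eq)
    qed
  qed
  then show ?thesis using B by (intro exI[of _ "B + 1"]) auto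
qed

lemma deriv_sqrt3:
  assumes "t > 0"
  shows "((\<lambda>t. 1 / sqrt t ^ 3) has_real_derivative - 3 / (2 * sqrt t ^ 5)) (at t)"
proof -
  have ds: "DERIV sqrt t :> inverse (sqrt t) / 2" using DERIV_real_sqrt assms .
  have dp: "DERIV (\<lambda>x. x^3) (sqrt t) :> 3 * sqrt t ^ 2" using DERIV_pow[of 3 "sqrt t"] by simp
  have d3: "DERIV (\<lambda>x. sqrt x ^ 3) t :> 3 * sqrt t ^ 2 * (inverse (sqrt t) / 2)"
    using DERIV_chain2[OF dp ds] .
  have "DERIV (\<lambda>x. inverse (sqrt x ^ 3)) t :> - (3 * sqrt t ^ 2 * (inverse (sqrt t) / 2) * inverse ((sqrt t ^ 3) ^ Suc (Suc 0)))"
    using DERIV_inverse_fun[OF d3] assms by simp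
  moreover have "- (3 * sqrt t ^ 2 * (inverse (sqrt t) / 2) * inverse ((sqrt t ^ 3) ^ Suc (Suc 0))) = - 3 / (2 * sqrt t ^ 5)"
    using assms by (simp add: field_simps power_eq_if)
  ultimately show ?thesis by (simp add: inverse_eq_divide)
qed

context prob begin

lemma s_range:
  assumes l: "lb > c"
  obtains s1 s2 where "0 < s1" "\<And>p. p \<in> {p0..0} \<Longrightarrow> lb - 2 * Gam \<gamma> p \<in> {s1..s2}"
proof -
  obtain G where G: "\<And>p. p \<in> {p0..0} \<Longrightarrow> \<bar>Gam \<gamma> p\<bar> \<le> G" using cont_bound[OF cG] by blast
  show ?thesis
  proof (rule that[of "lb - c" "lb + 2 * G"])
    show "0 < lb - c" using l by simp
    fix p assume p: "p \<in> {p0..0}"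
    show "lb - 2 * Gam \<gamma> p \<in> {lb - c..lb + 2 * G}" using Gc[OF p] G[OF p] by auto
  qed
qed

lemma aa_shift: "aa \<gamma> t p = sqrt ((lb - 2 * Gam \<gamma> p) + (t - lb))"
  unfolding aa_def by (simp add: algebra_simps)

lemma al_shift: "al t p = 1 / sqrt ((lb - 2 * Gam \<gamma> p) + (t - lb)) ^ 3"
  unfolding al_def aa_shift[of t p lb] ..

lemma UD1:
  assumes l: "lb > c"
  shows "uniform_limit {p0..0} (\<lambda>t p. (aa \<gamma> t p - aa \<gamma> lb p) / (t - lb)) (\<lambda>p. inverse (aa \<gamma> lb p) / 2) (at lb)"
proof (rule uniform_limitI)
  fix e :: real assume e: "e > 0"
  obtain s1 s2 where s1: "0 < s1" and sr: "\<And>p. p \<in> {p0..0} \<Longrightarrow> lb - 2 * Gam \<gamma> p \<in> {s1..s2}"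
    using s_range[OF l] by blast
  define r where "r = s1 / 2"
  have r: "0 < r" using s1 by (simp add: r_def)
  obtain d where d: "d > 0" and dq: "\<And>h s. h \<noteq> 0 \<and> \<bar>h\<bar> < d \<and> s \<in> {s1..s2} \<Longrightarrow>
      \<bar>(sqrt (s+h) - sqrt s) / h - inverse (sqrt s) / 2\<bar> \<le> e / 2"
  proof -
    have "\<exists>d>0. \<forall>h s. h \<noteq> 0 \<and> \<bar>h\<bar> < d \<and> s \<in> {s1..s2} \<longrightarrow>
      \<bar>(sqrt (s+h) - sqrt s) / h - inverse (sqrt s) / 2\<bar> \<le> e / 2"
    proof (rule unif_dq[OF r, where \<phi> = sqrt and \<phi>' = "\<lambda>t. inverse (sqrt t) / 2"])
      fix t assume "t \<in> {s1 - r..s2 + r}"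
      then have "t > 0" using s1 by (auto simp: r_def)
      then show "(sqrt has_real_derivative inverse (sqrt t) / 2) (at t)" by (rule DERIV_real_sqrt)
    next
      show "continuous_on {s1 - r..s2 + r} (\<lambda>t. inverse (sqrt t) / 2)"
        using s1 by (intro continuous_intros) (auto simp: r_def)
    qed (use e in auto)
    then show ?thesis using that by blast
  qed
  show "\<forall>\<^sub>F t in at lb. \<forall>p\<in>{p0..0}. dist ((aa \<gamma> t p - aa \<gamma> lb p) / (t - lb)) (inverse (aa \<gamma> lb p) / 2) < e"
    unfolding eventually_at
  proof (intro exI[of _ d] conjI allI impI ballI)
    show "d > 0" by (rule d)
    fix t p assume tU: "t \<in> UNIV" and t: "t \<noteq> lb \<and> dist t lb < d" and p: "p \<in> {p0..0}"
    have "\<bar>(sqrt ((lb - 2 * Gam \<gamma> p) + (t - lb)) - sqrt (lb - 2 * Gam \<gamma> p)) / (t - lb) - inverse (sqrt (lb - 2 * Gam \<gamma> p)) / 2\<bar> \<le> e / 2"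
      using t sr[OF p] by (intro dq) (auto simp: dist_real_def)
    then show "dist ((aa \<gamma> t p - aa \<gamma> lb p) / (t - lb)) (inverse (aa \<gamma> lb p) / 2) < e"
      using e by (simp add: dist_real_def aa_shift[of t p lb] aa_shift[of lb p lb])
  qed
qed

lemma UD2:
  assumes l: "lb > c"
  shows "uniform_limit {p0..0} (\<lambda>t p. (al lb p - al t p) / (t - lb)) (\<lambda>p. 3 / (2 * aa \<gamma> lb p ^ 5)) (at lb)"
proof (rule uniform_limitI)
  fix e :: real assume e: "e > 0"
  obtain s1 s2 where s1: "0 < s1" and sr: "\<And>p. p \<in> {p0..0} \<Longrightarrow> lb - 2 * Gam \<gamma> p \<in> {s1..s2}"
    using s_range[OF l] by blast
  define r where "r = s1 / 2"
  have r: "0 < r" using s1 by (simp add: r_def)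
  obtain d where d: "d > 0" and dq: "\<And>h s. h \<noteq> 0 \<and> \<bar>h\<bar> < d \<and> s \<in> {s1..s2} \<Longrightarrow>
      \<bar>(1 / sqrt (s+h) ^ 3 - 1 / sqrt s ^ 3) / h - - 3 / (2 * sqrt s ^ 5)\<bar> \<le> e / 2"
  proof -
    have "\<exists>d>0. \<forall>h s. h \<noteq> 0 \<and> \<bar>h\<bar> < d \<and> s \<in> {s1..s2} \<longrightarrow>
      \<bar>(1 / sqrt (s+h) ^ 3 - 1 / sqrt s ^ 3) / h - - 3 / (2 * sqrt s ^ 5)\<bar> \<le> e / 2"
    proof (rule unif_dq[OF r, where \<phi> = "\<lambda>t. 1 / sqrt t ^ 3"])
      fix t assume "t \<in> {s1 - r..s2 + r}"
      then have "t > 0" using s1 by (auto simp: r_def)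
      then show "((\<lambda>t. 1 / sqrt t ^ 3) has_real_derivative - 3 / (2 * sqrt t ^ 5)) (at t)" by (rule deriv_sqrt3)
    next
      show "continuous_on {s1 - r..s2 + r} (\<lambda>t. - 3 / (2 * sqrt t ^ 5))"
        using s1 by (intro continuous_intros) (auto simp: r_def)
    qed (use e in auto)
    then show ?thesis using that by blast
  qed
  show "\<forall>\<^sub>F t in at lb. \<forall>p\<in>{p0..0}. dist ((al lb p - al t p) / (t - lb)) (3 / (2 * aa \<gamma> lb p ^ 5)) < e"
    unfolding eventually_at
  proof (intro exI[of _ d] conjI allI impI ballI)
    show "d > 0" by (rule d)
    fix t p assume tU: "t \<in> UNIV" and t: "t \<noteq> lb \<and> dist t lb < d" and p: "p \<in> {p0..0}"
    have bnd: "\<bar>(1 / sqrt ((lb - 2 * Gam \<gamma> p) + (t - lb)) ^ 3 - 1 / sqrt (lb - 2 * Gam \<gamma> p) ^ 3) / (t - lb)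
       - - 3 / (2 * sqrt (lb - 2 * Gam \<gamma> p) ^ 5)\<bar> \<le> e / 2"
      using t sr[OF p] by (intro dq) (auto simp: dist_real_def)
    have eqn: "(al lb p - al t p) / (t - lb) - 3 / (2 * aa \<gamma> lb p ^ 5) =
      - ((1 / sqrt ((lb - 2 * Gam \<gamma> p) + (t - lb)) ^ 3 - 1 / sqrt (lb - 2 * Gam \<gamma> p) ^ 3) / (t - lb)
       - - 3 / (2 * sqrt (lb - 2 * Gam \<gamma> p) ^ 5))"
    proof -
      have gen: "\<And>u v h C D::real. D = - C \<Longrightarrow> (v - u) / h - C = - ((u - v) / h - D)" by (simp add: diff_divide_distrib)
      have eqs: "al lb p = 1 / sqrt (lb - 2 * Gam \<gamma> p) ^ 3" "aa \<gamma> lb p = sqrt (lb - 2 * Gam \<gamma> p)"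
        unfolding al_def aa_def by simp_all
      show ?thesis unfolding al_shift[of t p lb] eqs by (rule gen) simp
    qed
    have "dist ((al lb p - al t p) / (t - lb)) (3 / (2 * aa \<gamma> lb p ^ 5)) =
      \<bar>(1 / sqrt ((lb - 2 * Gam \<gamma> p) + (t - lb)) ^ 3 - 1 / sqrt (lb - 2 * Gam \<gamma> p) ^ 3) / (t - lb)
       - - 3 / (2 * sqrt (lb - 2 * Gam \<gamma> p) ^ 5)\<bar>"
      unfolding dist_real_def eqn by (rule abs_minus_cancel)
    then show "dist ((al lb p - al t p) / (t - lb)) (3 / (2 * aa \<gamma> lb p ^ 5)) < e"
      using bnd e by linarith
  qed
qed

lemma ev_c: "lb > c \<Longrightarrow> \<forall>\<^sub>F t in at lb. t > c"
  unfolding eventually_at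
  by (intro exI[of _ "lb - c"]) (auto simp: dist_real_def)

lemma L1_cont: "lb > c \<Longrightarrow> continuous_on {p0..0} (\<lambda>p. inverse (aa \<gamma> lb p) / 2)"
  using A_cont A_pos by (intro continuous_intros) force+

lemma L2_cont: "lb > c \<Longrightarrow> continuous_on {p0..0} (\<lambda>p. 3 / (2 * aa \<gamma> lb p ^ 5))"
  using A_cont A_pos by (intro continuous_intros) force+

lemma unif_lam:
  assumes l: "lb > c"
  shows "uniform_limit {p0..0} (\<lambda>t. Zs t mb) (Zs lb mb) (at lb)"
        "uniform_limit {p0..0} (\<lambda>t. Ws t mb) (Ws lb mb) (at lb)"
proof -
  obtain C1 where C1: "C1 \<ge> 0" "\<forall>\<^sub>F t in at lb. \<forall>p\<in>{p0..0}. \<bar>aa \<gamma> t p - aa \<gamma> lb p\<bar> \<le> C1 * \<bar>t - lb\<bar>"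
    using unif_quot_bound[OF UD1[OF l] bounded_cont_img[OF L1_cont[OF l]]] by blast
  obtain C2 where C2: "C2 \<ge> 0" "\<forall>\<^sub>F t in at lb. \<forall>p\<in>{p0..0}. \<bar>al lb p - al t p\<bar> \<le> C2 * \<bar>t - lb\<bar>"
  proof -
    have u: "uniform_limit {p0..0} (\<lambda>t p. ((\<lambda>t p. - al t p) t p - (- al lb p)) / (t - lb)) (\<lambda>p. 3 / (2 * aa \<gamma> lb p ^ 5)) (at lb)"
      using UD2[OF l] by (simp add: algebra_simps)
    show ?thesis using unif_quot_bound[OF u bounded_cont_img[OF L2_cont[OF l]]] that by (auto simp: abs_minus_commute)
  qed
  obtain Am where Am: "\<And>p. p \<in> {p0..0} \<Longrightarrow> \<bar>aa \<gamma> lb p\<bar> \<le> Am" using cont_bound[OF A_cont] by blast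
  obtain Al where Al: "\<And>p. p \<in> {p0..0} \<Longrightarrow> \<bar>al lb p\<bar> \<le> Al" using cont_bound[OF al_cont[OF l]] by blast
  have Am0: "0 \<le> Am" using Am[of 0] p0 by auto
  have Al0: "0 \<le> Al" using Al[of 0] p0 by auto
  define M where "M = max (Al + C2) (\<bar>mb\<bar> * (Am + C1))"
  have M0: "0 \<le> M" unfolding M_def using Al0 C2 by (simp add: le_max_iff_disj)
  define K where "K = max C2 (\<bar>mb\<bar> * C1)"
  define e where "e t = K * \<bar>t - lb\<bar> + \<bar>aa \<gamma> t p0 ^ 3 - aa \<gamma> lb p0 ^ 3\<bar>" for t
  have e0: "(e \<longlongrightarrow> 0) (at lb)"
  proof -
    have "((\<lambda>t. aa \<gamma> t p0) \<longlongrightarrow> aa \<gamma> lb p0) (at lb)"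
      unfolding aa_def by (intro tendsto_intros)
    then have "((\<lambda>t. K * \<bar>t - lb\<bar> + \<bar>aa \<gamma> t p0 ^ 3 - aa \<gamma> lb p0 ^ 3\<bar>) \<longlongrightarrow>
        K * \<bar>lb - lb\<bar> + \<bar>aa \<gamma> lb p0 ^ 3 - aa \<gamma> lb p0 ^ 3\<bar>) (at lb)"
      by (intro tendsto_intros)
    then show ?thesis by (simp add: e_def[abs_def])
  qed
  have near: "\<forall>\<^sub>F t in at lb. \<bar>t - lb\<bar> < 1"
    by (simp add: eventually_at dist_real_def) (metis zero_less_one)
  have M: "\<forall>\<^sub>F t in at lb. \<forall>p\<in>{p0..0}. \<bar>al t p\<bar> \<le> M \<and> \<bar>be t mb p\<bar> \<le> M"
    using near C1(2) C2(2)
  proof eventually_elim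
    case (elim t)
    show ?case
    proof
      fix p assume p: "p \<in> {p0..0}"
      have "C2 * \<bar>t - lb\<bar> \<le> C2 * 1" using elim(1) C2(1) by (intro mult_left_mono) auto
      moreover have "\<bar>al t p\<bar> \<le> \<bar>al lb p\<bar> + \<bar>al lb p - al t p\<bar>" by linarith
      ultimately have 1: "\<bar>al t p\<bar> \<le> Al + C2" using Al[OF p] elim(3) p by fastforce
      have "C1 * \<bar>t - lb\<bar> \<le> C1 * 1" using elim(1) C1(1) by (intro mult_left_mono) auto
      moreover have "\<bar>aa \<gamma> t p\<bar> \<le> \<bar>aa \<gamma> lb p\<bar> + \<bar>aa \<gamma> t p - aa \<gamma> lb p\<bar>" by linarith
      ultimately have "\<bar>aa \<gamma> t p\<bar> \<le> Am + C1" using Am[OF p] elim(2) p by fastforce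
      then have "\<bar>mb\<bar> * \<bar>aa \<gamma> t p\<bar> \<le> \<bar>mb\<bar> * (Am + C1)" by (intro mult_left_mono) auto
      then have 2: "\<bar>be t mb p\<bar> \<le> \<bar>mb\<bar> * (Am + C1)" by (simp add: be_def abs_mult)
      show "\<bar>al t p\<bar> \<le> M \<and> \<bar>be t mb p\<bar> \<le> M" using 1 2 unfolding M_def by auto
    qed
  qed
  have ee: "\<forall>\<^sub>F t in at lb. (\<forall>p\<in>{p0..0}. \<bar>al t p - al lb p\<bar> \<le> e t \<and> \<bar>be t mb p - be lb mb p\<bar> \<le> e t) \<and>
        \<bar>Zs t mb p0 - Zs lb mb p0\<bar> \<le> e t \<and> \<bar>Ws t mb p0 - Ws lb mb p0\<bar> \<le> e t"
    using ev_c[OF l] C1(2) C2(2)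
  proof eventually_elim
    case (elim t)
    have eK: "K * \<bar>t - lb\<bar> \<le> e t" unfolding e_def by simp
    have "C2 * \<bar>t - lb\<bar> \<le> K * \<bar>t - lb\<bar>" unfolding K_def by (intro mult_right_mono) auto
    have "\<bar>mb\<bar> * C1 * \<bar>t - lb\<bar> \<le> K * \<bar>t - lb\<bar>" unfolding K_def by (intro mult_right_mono) auto
    show ?case
    proof (intro conjI ballI)
      fix p assume p: "p \<in> {p0..0}"
      show "\<bar>al t p - al lb p\<bar> \<le> e t"
        using elim(3) p \<open>C2 * \<bar>t - lb\<bar> \<le> K * \<bar>t - lb\<bar>\<close> eK by (force simp: abs_minus_commute)
      have "\<bar>be t mb p - be lb mb p\<bar> = \<bar>mb\<bar> * \<bar>aa \<gamma> t p - aa \<gamma> lb p\<bar>"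
        by (simp add: be_def abs_mult[symmetric] algebra_simps)
      also have "\<dots> \<le> \<bar>mb\<bar> * (C1 * \<bar>t - lb\<bar>)" using elim(2) p by (intro mult_left_mono) auto
      finally show "\<bar>be t mb p - be lb mb p\<bar> \<le> e t"
        using \<open>\<bar>mb\<bar> * C1 * \<bar>t - lb\<bar> \<le> K * \<bar>t - lb\<bar>\<close> eK by (simp add: mult.assoc)
    next
      have "0 \<le> K * \<bar>t - lb\<bar>"
        using \<open>C2 * \<bar>t - lb\<bar> \<le> K * \<bar>t - lb\<bar>\<close> C2(1) by (meson abs_ge_zero mult_nonneg_nonneg order_trans)
      then have "0 \<le> e t" unfolding e_def by simp
      then show "\<bar>Zs t mb p0 - Zs lb mb p0\<bar> \<le> e t"
        using sol_props(2)[OF l] sol_props(2)[OF elim(1)] by simp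
      show "\<bar>Ws t mb p0 - Ws lb mb p0\<bar> \<le> e t"
        using sol_props(3)[OF l] sol_props(3)[OF elim(1)] \<open>0 \<le> K * \<bar>t - lb\<bar>\<close>
        by (simp add: e_def)
    qed
  qed
  have s2: "\<forall>\<^sub>F t in at lb. sys (al t) (be t mb) (Zs t mb) (Ws t mb) p0 0"
    using ev_c[OF l] by eventually_elim (rule sol_props(1))
  show "uniform_limit {p0..0} (\<lambda>t. Zs t mb) (Zs lb mb) (at lb)"
       "uniform_limit {p0..0} (\<lambda>t. Ws t mb) (Ws lb mb) (at lb)"
    using stab_unif[OF _ sol_props(1)[OF l, of mb] s2 M M0 e0 ee] p0 by auto
qed

lemma deriv_lam:
  assumes l: "lb > c" and X0: "Ws lb mb 0 - (g + \<sigma> * mb) * Zs lb mb 0 = 0" and Z0: "Zs lb mb 0 \<noteq> 0"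
  shows "((\<lambda>t. Xi \<gamma> g \<sigma> p0 t mb) has_real_derivative
     integral {p0..0} (\<lambda>p. 3 / (2 * aa \<gamma> lb p ^ 5) * Ws lb mb p * Ws lb mb p +
        mb * (inverse (aa \<gamma> lb p) / 2) * Zs lb mb p * Zs lb mb p) / Zs lb mb 0) (at lb)"
proof -
  define z where "z = Zs lb mb"
  define w where "w = Ws lb mb"
  define D1 where "D1 t p = (aa \<gamma> t p - aa \<gamma> lb p) / (t - lb)" for t p
  define D2 where "D2 t p = (al lb p - al t p) / (t - lb)" for t p
  define L1 where "L1 p = inverse (aa \<gamma> lb p) / 2" for p
  define L2 where "L2 p = 3 / (2 * aa \<gamma> lb p ^ 5)" for p
  define I where "I t = integral {p0..0} (\<lambda>p. D2 t p * w p * Ws t mb p + mb * D1 t p * z p * Zs t mb p)" for t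
  define Q where "Q t = I t / z 0" for t
  have s0: "sys (al lb) (be lb mb) z w p0 0" unfolding z_def w_def by (rule sol_props(1)[OF l])
  have cz: "continuous_on {p0..0} z" "continuous_on {p0..0} w" using sys_cont[OF s0] by auto
  have ne: "\<forall>\<^sub>F t in at lb. t \<noteq> lb" by (simp add: eventually_at_filter)
  have eq: "\<forall>\<^sub>F t in at lb. Xi \<gamma> g \<sigma> p0 t mb - Xi \<gamma> g \<sigma> p0 lb mb = (t - lb) * Q t"
    using ev_c[OF l] ne
  proof eventually_elim
    case (elim t)
    have sm: "sys (al t) (be t mb) (Zs t mb) (Ws t mb) p0 0" by (rule sol_props(1)[OF elim(1)])
    have wr: "z 0 * Ws t mb 0 - Zs t mb 0 * w 0 =
      integral {p0..0} (\<lambda>p. (al lb p - al t p) * w p * Ws t mb p + (be t mb p - be lb mb p) * z p * Zs t mb p)"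
      using wronskian[OF _ s0 sm] p0 sol_props(2)[OF l] sol_props(2)[OF elim(1)] by (simp add: z_def)
    also have "\<dots> = integral {p0..0} (\<lambda>p. (t - lb) * (D2 t p * w p * Ws t mb p + mb * D1 t p * z p * Zs t mb p))"
    proof (rule integral_cong)
      fix p
      have h1: "(t - lb) * D2 t p = al lb p - al t p" using elim(2) by (simp add: D2_def)
      have h2: "(t - lb) * D1 t p = aa \<gamma> t p - aa \<gamma> lb p" using elim(2) by (simp add: D1_def)
      have "(t - lb) * (D2 t p * w p * Ws t mb p + mb * D1 t p * z p * Zs t mb p) =
          ((t - lb) * D2 t p) * w p * Ws t mb p + mb * ((t - lb) * D1 t p) * z p * Zs t mb p"
        by (simp add: algebra_simps)
      also have "\<dots> = (al lb p - al t p) * w p * Ws t mb p + mb * (aa \<gamma> t p - aa \<gamma> lb p) * z p * Zs t mb p"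
        unfolding h1 h2 ..
      also have "\<dots> = (al lb p - al t p) * w p * Ws t mb p + (be t mb p - be lb mb p) * z p * Zs t mb p"
        by (simp add: be_def algebra_simps)
      finally show "(al lb p - al t p) * w p * Ws t mb p + (be t mb p - be lb mb p) * z p * Zs t mb p =
          (t - lb) * (D2 t p * w p * Ws t mb p + mb * D1 t p * z p * Zs t mb p)" by simp
    qed
    also have "\<dots> = (t - lb) * I t" unfolding I_def by simp
    finally have wr': "z 0 * Ws t mb 0 - Zs t mb 0 * w 0 = (t - lb) * I t" .
    have x0: "Xi \<gamma> g \<sigma> p0 lb mb = 0" using Xi_eq[OF l] X0 by simp
    have "z 0 * Xi \<gamma> g \<sigma> p0 t mb = z 0 * (Ws t mb 0 - (g + \<sigma> * mb) * Zs t mb 0)" by (simp add: Xi_eq[OF elim(1)])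
    also have "\<dots> = (t - lb) * I t + Zs t mb 0 * (w 0 - (g + \<sigma> * mb) * z 0)"
      using wr' by (simp add: algebra_simps)
    also have "\<dots> = (t - lb) * I t"
      using X0 by (simp add: z_def w_def)
    finally have "z 0 * Xi \<gamma> g \<sigma> p0 t mb = (t - lb) * I t" .
    then show ?case using Z0 x0 unfolding Q_def z_def by (simp add: field_simps)
  qed
  have uZ: "uniform_limit {p0..0} (\<lambda>t. Zs t mb) z (at lb)" unfolding z_def by (rule unif_lam[OF l])
  have uW: "uniform_limit {p0..0} (\<lambda>t. Ws t mb) w (at lb)" unfolding w_def by (rule unif_lam[OF l])
  have u1: "uniform_limit {p0..0} D1 L1 (at lb)" unfolding D1_def[abs_def] L1_def[abs_def] by (rule UD1[OF l])
  have u2: "uniform_limit {p0..0} D2 L2 (at lb)" unfolding D2_def[abs_def] L2_def[abs_def] by (rule UD2[OF l])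
  have cL1: "continuous_on {p0..0} L1" unfolding L1_def[abs_def] by (rule L1_cont[OF l])
  have cL2: "continuous_on {p0..0} L2" unfolding L2_def[abs_def] by (rule L2_cont[OF l])
  have t1a: "uniform_limit {p0..0} (\<lambda>t p. D2 t p * w p) (\<lambda>p. L2 p * w p) (at lb)"
    by (rule uniform_lim_mult[OF u2 uniform_limit_const bounded_cont_img[OF cL2] bounded_cont_img[OF cz(2)]])
  have t1: "uniform_limit {p0..0} (\<lambda>t p. D2 t p * w p * Ws t mb p) (\<lambda>p. L2 p * w p * w p) (at lb)"
    using cL2 cz by (intro uniform_lim_mult[OF t1a uW] bounded_cont_img continuous_intros)
  have t2a: "uniform_limit {p0..0} (\<lambda>t p. mb * D1 t p) (\<lambda>p. mb * L1 p) (at lb)"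
    using cL1 by (intro uniform_lim_mult[OF uniform_limit_const u1] bounded_cont_img continuous_intros)
  have t2b: "uniform_limit {p0..0} (\<lambda>t p. mb * D1 t p * z p) (\<lambda>p. mb * L1 p * z p) (at lb)"
    using cL1 cz by (intro uniform_lim_mult[OF t2a uniform_limit_const] bounded_cont_img continuous_intros)
  have t2: "uniform_limit {p0..0} (\<lambda>t p. mb * D1 t p * z p * Zs t mb p) (\<lambda>p. mb * L1 p * z p * z p) (at lb)"
    using cL1 cz by (intro uniform_lim_mult[OF t2b uZ] bounded_cont_img continuous_intros)
  have lim_I: "(I \<longlongrightarrow> integral {p0..0} (\<lambda>p. L2 p * w p * w p + mb * L1 p * z p * z p)) (at lb)"
    unfolding I_def
  proof (rule integral_tendsto_unif)
    show "uniform_limit {p0..0} (\<lambda>t p. D2 t p * w p * Ws t mb p + mb * D1 t p * z p * Zs t mb p)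
        (\<lambda>p. L2 p * w p * w p + mb * L1 p * z p * z p) (at lb)"
      by (rule uniform_limit_add[OF t1 t2])
    show "\<forall>\<^sub>F t in at lb. continuous_on {p0..0} (\<lambda>p. D2 t p * w p * Ws t mb p + mb * D1 t p * z p * Zs t mb p)"
      using ev_c[OF l] ne
    proof eventually_elim
      case (elim t)
      show ?case unfolding D1_def D2_def
        using al_cont[OF l] al_cont[OF elim(1)] A_cont cz sys_cont[OF sol_props(1)[OF elim(1)]] elim(2)
        by (intro continuous_intros) auto
    qed
    show "continuous_on {p0..0} (\<lambda>p. L2 p * w p * w p + mb * L1 p * z p * z p)"
      using cL1 cL2 cz by (intro continuous_intros)
  qed (use p0 in auto)
  have "(Q \<longlongrightarrow> integral {p0..0} (\<lambda>p. L2 p * w p * w p + mb * L1 p * z p * z p) / z 0) (at lb)"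
    unfolding Q_def[abs_def] by (intro tendsto_intros lim_I) (use Z0 z_def in auto)
  then show ?thesis
    by (intro deriv_from_quot[where Q = Q] eq) (simp add: L1_def L2_def z_def w_def)
qed

end


lemma Gam_facts:
  fixes \<gamma> \<gamma>1 \<gamma>2 :: "real \<Rightarrow> real" and p0 p1 \<alpha> :: real
  assumes "p0 < p1" "p1 < 0"
    and h1: "holder_on \<alpha> {p0..p1} \<gamma>1" and h2: "holder_on \<alpha> {p1..0} \<gamma>2"
    and e1: "\<forall>p\<in>{p0..<p1}. \<gamma> p = \<gamma>1 p" and e2: "\<forall>p\<in>{p1<..0}. \<gamma> p = \<gamma>2 p"
  shows "continuous_on {p0..0} (Gam \<gamma>)" "Gam \<gamma> 0 = 0"
proof -
  have c1: "continuous_on {p0..p1} \<gamma>1" using h1 by (simp add: holder_on_def)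
  have c2: "continuous_on {p1..0} \<gamma>2" using h2 by (simp add: holder_on_def)
  have i1: "\<gamma> integrable_on {p0..p1}"
    by (rule integrable_spike_finite[where S = "{p1}" and f = \<gamma>1]) (use e1 integrable_continuous_real[OF c1] in auto)
  have i2: "\<gamma> integrable_on {p1..0}"
    by (rule integrable_spike_finite[where S = "{p1}" and f = \<gamma>2]) (use e2 integrable_continuous_real[OF c2] in auto)
  have i: "\<gamma> integrable_on {p0..0}" using Henstock_Kurzweil_Integration.integrable_combine[OF _ _ i1 i2] assms by auto
  show "continuous_on {p0..0} (Gam \<gamma>)"
    unfolding Gam_def[abs_def] using indefinite_integral_continuous_1'[OF i] by (intro continuous_intros)
  show "Gam \<gamma> 0 = 0" by (simp add: Gam_def)
qed

theorem lemma4p4: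
  fixes g \<sigma> p0 p1 \<alpha> lam0 lb mb :: real and \<gamma> \<gamma>1 \<gamma>2 :: "real \<Rightarrow> real"
  assumes "g > 0" and "\<sigma> > 0" and "p0 < p1" and "p1 < 0"
    and "0 < \<alpha>" and "\<alpha> < 1"
    and "holder_on \<alpha> {p0..p1} \<gamma>1" and "holder_on \<alpha> {p1..0} \<gamma>2"
    and "\<forall>p\<in>{p0..<p1}. \<gamma> p = \<gamma>1 p" and "\<forall>p\<in>{p1<..0}. \<gamma> p = \<gamma>2 p"
    and "lam0 > 2 * (SUP p\<in>{p0..0}. Gam \<gamma> p)"
    and "1 / g = integral {p0..0} (\<lambda>p. 1 / (aa \<gamma> lam0 p) ^ 3)"
    and "lam0 \<le> lb" and "0 < mb"
    and "Xi \<gamma> g \<sigma> p0 lb mb = 0"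
  shows "(\<exists>d>0. ((\<lambda>l. Xi \<gamma> g \<sigma> p0 l mb) has_real_derivative d) (at lb)) \<and>
         (\<exists>d<0. ((\<lambda>m. Xi \<gamma> g \<sigma> p0 lb m) has_real_derivative d) (at mb))"
proof -
  note gf = Gam_facts[OF assms(3,4,7,8,9,10)]
  define c where "c = 2 * (SUP p\<in>{p0..0}. Gam \<gamma> p)"
  have bdd: "bdd_above (Gam \<gamma> ` {p0..0})"
    by (rule bounded_imp_bdd_above[OF bounded_cont_img[OF gf(1)]])
  have Gc: "2 * Gam \<gamma> p \<le> c" if "p \<in> {p0..0}" for p
    unfolding c_def using cSUP_upper[OF that bdd] by simp
  have p0: "p0 < 0" using assms by simp
  interpret prob \<gamma> p0 c
    by unfold_locales (use p0 gf Gc in auto)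
  have l0: "lam0 > c" using assms(11) c_def by simp
  have l: "lb > c" using l0 assms(13) by simp
  have mb0: "0 \<le> mb" using assms(14) by simp
  define z where "z = Zs lb mb"
  define w where "w = Ws lb mb"
  have s0: "sys (al lb) (be lb mb) z w p0 0" unfolding z_def w_def by (rule sol_props(1)[OF l])
  have cz: "continuous_on {p0..0} z" "continuous_on {p0..0} w" using sys_cont[OF s0] by auto
  have zp0: "z p0 = 0" unfolding z_def by (rule sol_props(2)[OF l])
  have w0: "w p0 = aa \<gamma> lb p0 ^ 3" unfolding w_def by (rule sol_props(3)[OF l])
  have pos: "0 \<le> z p \<and> aa \<gamma> lb p0 ^ 3 \<le> w p" if "p \<in> {p0..0}" for p
    unfolding z_def w_def using sol_props(4)[OF l mb0 that] .
  have Ap: "0 < aa \<gamma> lb p" if "p \<in> {p0..0}" for p using A_pos[OF l that] .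
  have w0pos: "0 < aa \<gamma> lb p0 ^ 3" using Ap[of p0] p0 by simp
  have wpos: "0 < w p" if "p \<in> {p0..0}" for p using pos[OF that] w0pos by linarith
  have alpos: "0 < al lb p" if "p \<in> {p0..0}" for p using Ap[OF that] by (simp add: al_def)
  have cal: "continuous_on {p0..0} (al lb)" by (rule al_cont[OF l])
  have X0: "w 0 - (g + \<sigma> * mb) * z 0 = 0" using Xi_eq[OF l] assms(15) by (simp add: z_def w_def)
  have zint: "z 0 = integral {p0..0} (\<lambda>p. al lb p * w p)" using ftc_sys(1)[OF _ s0] p0 zp0 by simp
  have z0pos: "0 < z 0"
    unfolding zint
    by (rule pos_integral[of _ _ _ p0]) (use cal cz p0 alpos wpos in \<open>auto intro!: continuous_intros mult_nonneg_nonneg less_imp_le\<close>)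
  define J where "J = integral {p0..0} (\<lambda>p. 3 / (2 * aa \<gamma> lb p ^ 5) * w p * w p + mb * (inverse (aa \<gamma> lb p) / 2) * z p * z p)"
  have J: "0 < J"
    unfolding J_def
  proof (rule pos_integral[of _ _ _ p0])
    show "continuous_on {p0..0} (\<lambda>p. 3 / (2 * aa \<gamma> lb p ^ 5) * w p * w p + mb * (inverse (aa \<gamma> lb p) / 2) * z p * z p)"
      using A_cont Ap cz by (intro continuous_intros) force+
    fix x assume x: "x \<in> {p0..0}"
    show "0 \<le> 3 / (2 * aa \<gamma> lb x ^ 5) * w x * w x + mb * (inverse (aa \<gamma> lb x) / 2) * z x * z x"
      using Ap[OF x] mb0 by (intro add_nonneg_nonneg) (simp_all add: mult.assoc)
  next
    have "0 < 3 / (2 * aa \<gamma> lb p0 ^ 5) * w p0 * w p0" using Ap[of p0] wpos[of p0] p0 by simp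
    moreover have "0 \<le> mb * (inverse (aa \<gamma> lb p0) / 2) * z p0 * z p0" by (simp add: zp0)
    ultimately show "0 < 3 / (2 * aa \<gamma> lb p0 ^ 5) * w p0 * w p0 + mb * (inverse (aa \<gamma> lb p0) / 2) * z p0 * z p0"
      by linarith
  qed (use p0 in auto)
  have dlam: "((\<lambda>t. Xi \<gamma> g \<sigma> p0 t mb) has_real_derivative J / z 0) (at lb)"
    using deriv_lam[OF l X0[unfolded z_def w_def]] z0pos unfolding J_def z_def w_def by simp
  have part1: "\<exists>d>0. ((\<lambda>l. Xi \<gamma> g \<sigma> p0 l mb) has_real_derivative d) (at lb)"
    using dlam J z0pos by (intro exI[of _ "J / z 0"]) auto
  define N where "N = integral {p0..0} (\<lambda>p. aa \<gamma> lb p * z p * z p)"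
  have dmu: "((\<lambda>m. Xi \<gamma> g \<sigma> p0 lb m) has_real_derivative (N - \<sigma> * z 0 * z 0) / z 0) (at mb)"
    using deriv_mu[OF l X0[unfolded z_def w_def]] z0pos unfolding N_def z_def by simp
  have N: "N < \<sigma> * z 0 * z 0"
  proof -
    have cA: "continuous_on {p0..0} (aa \<gamma> lb)" by (rule A_cont)
    have cbe: "continuous_on {p0..0} (be lb mb)" by (rule be_cont)
    define E2 where "E2 = integral {p0..0} (\<lambda>p. al lb p * w p ^ 2)"
    define I1 where "I1 = integral {p0..0} (al lb)"
    have iE2: "(\<lambda>p. al lb p * w p ^ 2) integrable_on {p0..0}"
      using cal cz by (intro integrable_continuous_real continuous_intros)
    have iN: "(\<lambda>p. aa \<gamma> lb p * z p * z p) integrable_on {p0..0}"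
      using cA cz by (intro integrable_continuous_real continuous_intros)
    have iI1: "al lb integrable_on {p0..0}" using cal by (intro integrable_continuous_real)
    have iIw: "(\<lambda>p. al lb p * w p) integrable_on {p0..0}"
      using cal cz by (intro integrable_continuous_real continuous_intros)
    have en: "z 0 * w 0 = integral {p0..0} (\<lambda>p. al lb p * w p ^ 2 + be lb mb p * z p ^ 2)"
      using energy[OF _ s0 zp0] p0 by simp
    also have "\<dots> = integral {p0..0} (\<lambda>p. al lb p * w p ^ 2 + mb * (aa \<gamma> lb p * z p * z p))"
      by (rule integral_cong) (simp add: be_def power2_eq_square algebra_simps)
    also have "\<dots> = E2 + mb * N"
    proof -
      have iN': "(\<lambda>p. mb * (aa \<gamma> lb p * z p * z p)) integrable_on {p0..0}"
        using cA cz by (intro integrable_continuous_real continuous_intros)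
      show ?thesis unfolding E2_def N_def integral_add[OF iE2 iN'] by simp
    qed
    finally have en': "z 0 * w 0 = E2 + mb * N" .
    have zw: "z 0 * w 0 = (g + \<sigma> * mb) * z 0 ^ 2" using X0 by (simp add: power2_eq_square algebra_simps)
    have I1pos: "0 < I1" unfolding I1_def
      by (rule pos_integral[of _ _ _ p0]) (use cal p0 alpos in \<open>auto intro: less_imp_le\<close>)
    have I1g: "I1 \<le> 1 / g"
    proof -
      have "I1 \<le> integral {p0..0} (al lam0)"
        unfolding I1_def
      proof (rule integral_le[OF iI1])
        show "al lam0 integrable_on {p0..0}" by (intro integrable_continuous_real al_cont l0)
        fix p assume p: "p \<in> {p0..0}"
        have a0: "0 < aa \<gamma> lam0 p" by (rule A_pos[OF l0 p])
        have "aa \<gamma> lam0 p \<le> aa \<gamma> lb p" unfolding aa_def using assms(13) by simp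
        then have "aa \<gamma> lam0 p ^ 3 \<le> aa \<gamma> lb p ^ 3" using a0 by (intro power_mono) auto
        then show "al lb p \<le> al lam0 p" unfolding al_def using a0 Ap[OF p]
          by (intro divide_left_mono) auto
      qed
      also have "\<dots> = 1 / g" using assms(12) by (simp add: al_def[abs_def])
      finally show ?thesis .
    qed
    have Iw: "integral {p0..0} (\<lambda>p. al lb p * w p) = z 0" using zint by simp
    define cc where "cc = z 0 / I1"
    have hs: "((\<lambda>p. al lb p * w p ^ 2 - (2 * cc) * (al lb p * w p) + cc ^ 2 * al lb p) has_integral
        (E2 - (2 * cc) * z 0 + cc ^ 2 * I1)) {p0..0}"
    proof -
      have a: "((\<lambda>p. al lb p * w p ^ 2) has_integral E2) {p0..0}" unfolding E2_def using iE2 by blast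
      have b: "((\<lambda>p. al lb p * w p) has_integral z 0) {p0..0}" using iIw Iw by (metis integrable_integral)
      have c: "(al lb has_integral I1) {p0..0}" unfolding I1_def using iI1 by blast
      show ?thesis by (intro has_integral_add has_integral_diff has_integral_mult_right a b c)
    qed
    have feq: "(\<lambda>p. al lb p * (w p - cc) ^ 2) = (\<lambda>p. al lb p * w p ^ 2 - (2 * cc) * (al lb p * w p) + cc ^ 2 * al lb p)"
      by (rule ext) (simp add: power2_eq_square algebra_simps)
    have Kval: "integral {p0..0} (\<lambda>p. al lb p * (w p - cc) ^ 2) = E2 - (2 * cc) * z 0 + cc ^ 2 * I1"
      unfolding feq using hs by (rule integral_unique)
    have wdiff: "w 0 - w p0 = integral {p0..0} (\<lambda>p. be lb mb p * z p)" using ftc_sys(2)[OF _ s0] p0 by simp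
    have "0 < integral {p0..0} (\<lambda>p. be lb mb p * z p)"
    proof (rule pos_integral[of _ _ _ 0])
      show "continuous_on {p0..0} (\<lambda>p. be lb mb p * z p)" using cbe cz by (intro continuous_intros)
      fix x assume x: "x \<in> {p0..0}"
      show "0 \<le> be lb mb x * z x" using Ap[OF x] pos[OF x] mb0 by (simp add: be_def)
    next
      show "0 < be lb mb 0 * z 0" using Ap[of 0] p0 z0pos assms(14) by (simp add: be_def)
    qed (use p0 in auto)
    then have wne: "w 0 \<noteq> w p0" using wdiff by simp
    obtain x0 where x0: "x0 \<in> {p0..0}" "w x0 \<noteq> cc"
    proof (cases "w p0 = cc")
      case True
      then show ?thesis using that[of 0] wne p0 by auto
    next
      case False
      then show ?thesis using that[of p0] p0 by auto
    qed
    have Kpos: "0 < integral {p0..0} (\<lambda>p. al lb p * (w p - cc) ^ 2)"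
    proof (rule pos_integral[OF _ _ _ x0(1)])
      show "continuous_on {p0..0} (\<lambda>p. al lb p * (w p - cc) ^ 2)" using cal cz by (intro continuous_intros)
      fix x assume x: "x \<in> {p0..0}"
      show "0 \<le> al lb x * (w x - cc) ^ 2" using alpos[OF x] by simp
    next
      show "0 < al lb x0 * (w x0 - cc) ^ 2" using alpos[OF x0(1)] x0(2) by simp
    qed (use p0 in auto)
    have "E2 - (2 * cc) * z 0 + cc ^ 2 * I1 = E2 - z 0 ^ 2 / I1"
      unfolding cc_def using I1pos by (simp add: field_simps power2_eq_square)
    then have E2gt: "z 0 ^ 2 / I1 < E2" using Kpos Kval by linarith
    have "g * z 0 ^ 2 \<le> z 0 ^ 2 / I1"
    proof -
      have "g * I1 \<le> 1" using I1g assms(1) by (simp add: field_simps)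
      then have "g * I1 * z 0 ^ 2 \<le> 1 * z 0 ^ 2" by (intro mult_right_mono) auto
      then show ?thesis using I1pos by (simp add: field_simps)
    qed
    then have "g * z 0 ^ 2 < E2" using E2gt by linarith
    then have "mb * N < \<sigma> * mb * z 0 ^ 2" using en' zw by (simp add: algebra_simps)
    then have "mb * N < mb * (\<sigma> * z 0 * z 0)" by (simp add: power2_eq_square algebra_simps)
    then show ?thesis using assms(14) by simp
  qed
  have part2: "\<exists>d<0. ((\<lambda>m. Xi \<gamma> g \<sigma> p0 lb m) has_real_derivative d) (at mb)"
    using dmu N z0pos by (intro exI[of _ "(N - \<sigma> * z 0 * z 0) / z 0"]) (auto simp: divide_neg_pos)
  show ?thesis using part1 part2 ..
qed


end
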